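(* Let $\mathcal{R}^{rsc}$ be a rich single-crossing domain and $F:\mathcal{R}^{rsc}\to\mathbb{Z}$ a mechanism that is monotone with $V^F$ continuous. Suppose the range $Rn(F)$ is countable, closed in $\mathbb{Z}$, and has finitely many limit points. Then $F$ is strategy-proof.
   Context: $\mathbb{Z}=[0,\infty)\times[0,1]$ (Euclidean topology); $(t',q')<(t'',q'')$ means $t'<t''$, $q'<q''$; $x\le y$ means $x=y$ or $x<y$; $\square(z)=\{x:x\le z\}$. A classical preference is a complete transitive relation $R$ on $\mathbb{Z}$ (strict part $P$, indifference $I$) strictly decreasing in $t$ for fixed $q$, strictly increasing in $q$ for fixed $t$, with closed upper and lower contour sets. Distinct classical preferences satisfy single-crossing if any indifference set of one meets any indifference set of the other in at most one point. A rich single-crossing domain $\mathcal{R}^{rsc}$ is a set of pairwise single-crossing classical preferences such that for all $x'<x''$ some member is indifferent between them. For distinct members, $R'\prec R''$ means $\square(z)\cap\{x:xR''z\}\subseteq\square(z)\cap\{x:xR'z\}$ for all $z$; $\prec$ is a linear order; order topology. $F$ is strategy-proof if $F(R')R'F(R'')$ for all $R',R''$; monotone if $R'\prec R''$ implies $F(R')\le F(R'')$. $V^F(R)=\{z:zIF(R)\}$ is continuous if for every $R$ and every monotone sequence $R^n\to R$ ($R^n\precsim R^{n+1}$ for all $n$, or $R^{n+1}\precsim R^n$ for all $n$), $F(R^n)$ converges and $\lim F(R^n)\,I\,F(R)$. *)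

theory Defs
  imports "HOL-Analysis.Analysis"
begin

type_synonym pt = "real \<times> real"
type_synonym pref = "pt \<Rightarrow> pt \<Rightarrow> bool"   \<comment> \<open>R x y means x R y (x weakly preferred to y)\<close>

definition Zset :: "pt set" where
  "Zset = {(t, q). 0 \<le> t \<and> 0 \<le> q \<and> q \<le> 1}"

definition lt_pt :: "pt \<Rightarrow> pt \<Rightarrow> bool" where
  "lt_pt x y \<longleftrightarrow> fst x < fst y \<and> snd x < snd y"

definition le_pt :: "pt \<Rightarrow> pt \<Rightarrow> bool" where
  "le_pt x y \<longleftrightarrow> x = y \<or> lt_pt x y"

definition box_pt :: "pt \<Rightarrow> pt set" where
  "box_pt z = {x \<in> Zset. le_pt x z}"

definition strict :: "pref \<Rightarrow> pt \<Rightarrow> pt \<Rightarrow> bool" where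
  "strict R x y \<longleftrightarrow> R x y \<and> \<not> R y x"

definition indiff :: "pref \<Rightarrow> pt \<Rightarrow> pt \<Rightarrow> bool" where
  "indiff R x y \<longleftrightarrow> R x y \<and> R y x"

definition classical_pref :: "pref \<Rightarrow> bool" where
  "classical_pref R \<longleftrightarrow>
     (\<forall>x y. R x y \<longrightarrow> x \<in> Zset \<and> y \<in> Zset) \<and>
     (\<forall>x\<in>Zset. \<forall>y\<in>Zset. R x y \<or> R y x) \<and>
     (\<forall>x\<in>Zset. \<forall>y\<in>Zset. \<forall>z\<in>Zset. R x y \<longrightarrow> R y z \<longrightarrow> R x z) \<and>
     (\<forall>t1 t2 q. (t1, q) \<in> Zset \<longrightarrow> (t2, q) \<in> Zset \<longrightarrow> t1 < t2 \<longrightarrow> strict R (t1, q) (t2, q)) \<and>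
     (\<forall>t q1 q2. (t, q1) \<in> Zset \<longrightarrow> (t, q2) \<in> Zset \<longrightarrow> q1 < q2 \<longrightarrow> strict R (t, q2) (t, q1)) \<and>
     (\<forall>z\<in>Zset. closed {x \<in> Zset. R x z} \<and> closed {x \<in> Zset. R z x})"

definition indiff_set :: "pref \<Rightarrow> pt \<Rightarrow> pt set" where
  "indiff_set R z = {x \<in> Zset. indiff R x z}"

definition single_crossing :: "pref \<Rightarrow> pref \<Rightarrow> bool" where
  "single_crossing R1 R2 \<longleftrightarrow>
     (\<forall>z1\<in>Zset. \<forall>z2\<in>Zset. \<forall>a b. a \<in> indiff_set R1 z1 \<inter> indiff_set R2 z2 \<longrightarrow>
        b \<in> indiff_set R1 z1 \<inter> indiff_set R2 z2 \<longrightarrow> a = b)"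

definition rich_single_crossing :: "pref set \<Rightarrow> bool" where
  "rich_single_crossing D \<longleftrightarrow>
     (\<forall>R\<in>D. classical_pref R) \<and>
     (\<forall>R1\<in>D. \<forall>R2\<in>D. R1 \<noteq> R2 \<longrightarrow> single_crossing R1 R2) \<and>
     (\<forall>x1\<in>Zset. \<forall>x2\<in>Zset. lt_pt x1 x2 \<longrightarrow> (\<exists>R\<in>D. indiff R x1 x2))"

definition prec :: "pref \<Rightarrow> pref \<Rightarrow> bool" where
  "prec R1 R2 \<longleftrightarrow> R1 \<noteq> R2 \<and>
     (\<forall>z\<in>Zset. box_pt z \<inter> {x. R2 x z} \<subseteq> box_pt z \<inter> {x. R1 x z})"

definition preceq :: "pref \<Rightarrow> pref \<Rightarrow> bool" where
  "preceq R1 R2 \<longleftrightarrow> R1 = R2 \<or> prec R1 R2"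

definition strategy_proof :: "pref set \<Rightarrow> (pref \<Rightarrow> pt) \<Rightarrow> bool" where
  "strategy_proof D F \<longleftrightarrow> (\<forall>R1\<in>D. \<forall>R2\<in>D. R1 (F R1) (F R2))"

definition monotone_mech :: "pref set \<Rightarrow> (pref \<Rightarrow> pt) \<Rightarrow> bool" where
  "monotone_mech D F \<longleftrightarrow> (\<forall>R1\<in>D. \<forall>R2\<in>D. prec R1 R2 \<longrightarrow> le_pt (F R1) (F R2))"

text \<open>Convergence in the order topology of (D, \<prec>) (subbasis of open rays).\<close>
definition order_converges :: "pref set \<Rightarrow> (nat \<Rightarrow> pref) \<Rightarrow> pref \<Rightarrow> bool" where
  "order_converges D S R \<longleftrightarrow>
     (\<forall>a\<in>D. prec a R \<longrightarrow> (\<forall>\<^sub>F n in sequentially. prec a (S n))) \<and>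
     (\<forall>b\<in>D. prec R b \<longrightarrow> (\<forall>\<^sub>F n in sequentially. prec (S n) b))"

definition monotone_seq :: "(nat \<Rightarrow> pref) \<Rightarrow> bool" where
  "monotone_seq S \<longleftrightarrow> (\<forall>n. preceq (S n) (S (Suc n))) \<or> (\<forall>n. preceq (S (Suc n)) (S n))"

definition VF_continuous :: "pref set \<Rightarrow> (pref \<Rightarrow> pt) \<Rightarrow> bool" where
  "VF_continuous D F \<longleftrightarrow>
     (\<forall>R\<in>D. \<forall>S. (\<forall>n. S n \<in> D) \<longrightarrow> monotone_seq S \<longrightarrow> order_converges D S R \<longrightarrow>
        (\<exists>L. (\<lambda>n. F (S n)) \<longlonglongrightarrow> L \<and> indiff R L (F R)))"

end

theory Submission
  imports Defs
begin


lemma Zset_iff[simp]: "(t,q) \<in> Zset \<longleftrightarrow> 0 \<le> t \<and> 0 \<le> q \<and> q \<le> 1"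
  by (simp add: Zset_def)

lemma Zset_iff': "x \<in> Zset \<longleftrightarrow> 0 \<le> fst x \<and> 0 \<le> snd x \<and> snd x \<le> 1"
  by (cases x) simp

lemma closed_Zset: "closed Zset"
proof -
  have "Zset = {x. 0 \<le> fst x} \<inter> {x. 0 \<le> snd x} \<inter> {x. snd x \<le> 1}"
    by (auto simp: Zset_iff')
  moreover have "closed {x::pt. 0 \<le> fst x}" "closed {x::pt. 0 \<le> snd x}" "closed {x::pt. snd x \<le> 1}"
    by (intro closed_Collect_le continuous_intros)+
  ultimately show ?thesis by (metis closed_Int)
qed

lemma closed_avoid: "closed C \<Longrightarrow> x \<notin> C \<Longrightarrow> \<exists>e>0. \<forall>y. dist y x < e \<longrightarrow> y \<notin> C"
  using open_dist[of "-C"] unfolding closed_def by (metis ComplD ComplI dist_commute)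

context fixes R :: pref assumes cp: "classical_pref R"
begin

lemma cp_Z: "R x y \<Longrightarrow> x \<in> Zset \<and> y \<in> Zset"
  using cp unfolding classical_pref_def by blast

lemma cp_total: "x\<in>Zset \<Longrightarrow> y\<in>Zset \<Longrightarrow> R x y \<or> R y x"
  using cp unfolding classical_pref_def by blast

lemma cp_refl: "x\<in>Zset \<Longrightarrow> R x x"
  using cp_total by blast

lemma cp_trans: "R x y \<Longrightarrow> R y z \<Longrightarrow> R x z"
  using cp cp_Z unfolding classical_pref_def by blast

lemma cp_t: "(t1,q)\<in>Zset \<Longrightarrow> (t2,q)\<in>Zset \<Longrightarrow> t1<t2 \<Longrightarrow> strict R (t1,q) (t2,q)"
  using cp unfolding classical_pref_def by blast

lemma cp_q: "(t,q1)\<in>Zset \<Longrightarrow> (t,q2)\<in>Zset \<Longrightarrow> q1<q2 \<Longrightarrow> strict R (t,q2) (t,q1)"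
  using cp unfolding classical_pref_def by blast

lemma cp_closed_up: "z\<in>Zset \<Longrightarrow> closed {x\<in>Zset. R x z}"
  using cp unfolding classical_pref_def by blast

lemma cp_closed_lo: "z\<in>Zset \<Longrightarrow> closed {x\<in>Zset. R z x}"
  using cp unfolding classical_pref_def by blast

lemma strict_trans1: "strict R x y \<Longrightarrow> R y z \<Longrightarrow> strict R x z"
  unfolding strict_def using cp_trans by blast

lemma strict_trans2: "R x y \<Longrightarrow> strict R y z \<Longrightarrow> strict R x z"
  unfolding strict_def using cp_trans by blast

lemma not_R_strict: "x\<in>Zset \<Longrightarrow> y\<in>Zset \<Longrightarrow> \<not> R x y \<Longrightarrow> strict R y x"
  unfolding strict_def using cp_total by blast

lemma cp_mono: "(t1,q1)\<in>Zset \<Longrightarrow> (t2,q2)\<in>Zset \<Longrightarrow> t1 \<le> t2 \<Longrightarrow> q2 \<le> q1 \<Longrightarrow> R (t1,q1) (t2,q2)"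
proof -
  assume a: "(t1,q1)\<in>Zset" "(t2,q2)\<in>Zset" "t1 \<le> t2" "q2 \<le> q1"
  have m: "(t1,q2) \<in> Zset" using a by simp
  have "R (t1,q1) (t1,q2)"
    using a m cp_q[of t1 q2 q1] cp_refl[of "(t1,q1)"] unfolding strict_def
    by (cases "q2 < q1") auto
  moreover have "R (t1,q2) (t2,q2)"
    using a m cp_t[of t1 q2 t2] cp_refl[of "(t1,q2)"] unfolding strict_def
    by (cases "t1 < t2") auto
  ultimately show ?thesis using cp_trans by blast
qed

lemma cp_smono: "(t1,q1)\<in>Zset \<Longrightarrow> (t2,q2)\<in>Zset \<Longrightarrow> t1 \<le> t2 \<Longrightarrow> q2 \<le> q1 \<Longrightarrow> t1 < t2 \<or> q2 < q1
   \<Longrightarrow> strict R (t1,q1) (t2,q2)"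
proof -
  assume a: "(t1,q1)\<in>Zset" "(t2,q2)\<in>Zset" "t1 \<le> t2" "q2 \<le> q1" "t1 < t2 \<or> q2 < q1"
  have m: "(t1,q2) \<in> Zset" using a by simp
  show ?thesis
  proof (cases "q2 < q1")
    case True
    then have "strict R (t1,q1) (t1,q2)" using a m cp_q by blast
    moreover have "R (t1,q2) (t2,q2)" using cp_mono a m by blast
    ultimately show ?thesis using strict_trans1 by blast
  next
    case False
    then have "t1 < t2" "q1 = q2" using a by auto
    then show ?thesis using cp_t a by blast
  qed
qed

lemma cp_open_snd: "x\<in>Zset \<Longrightarrow> \<not> R x z \<Longrightarrow> z \<in> Zset \<Longrightarrow> \<exists>e>0. \<forall>y\<in>Zset. dist y z < e \<longrightarrow> \<not> R x y"
  using closed_avoid[OF cp_closed_lo[of x], of z] by auto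

lemma cp_open_fst: "z\<in>Zset \<Longrightarrow> \<not> R x z \<Longrightarrow> x \<in> Zset \<Longrightarrow> \<exists>e>0. \<forall>y\<in>Zset. dist y x < e \<longrightarrow> \<not> R y z"
  using closed_avoid[OF cp_closed_up[of z], of x] by auto

end


lemma dist_t[simp]: "dist (a::real, q::real) (b, q) = \<bar>a - b\<bar>"
  by (simp add: dist_Pair_Pair dist_real_def)
lemma dist_q[simp]: "dist (t::real, a::real) (t, b) = \<bar>a - b\<bar>"
  by (simp add: dist_Pair_Pair dist_real_def)

lemma closed_line: "closed C \<Longrightarrow> closed {t::real. (t, q::real) \<in> C}"
proof -
  assume "closed C"
  moreover have "\<And>x. isCont (\<lambda>t::real. (t, q::real)) x" by (intro continuous_intros)
  ultimately have "closed ((\<lambda>t. (t,q)) -` C)" by (rule continuous_closed_vimage)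
  then show ?thesis by (simp add: vimage_def)
qed

lemma closed_lineq: "closed C \<Longrightarrow> closed {q::real. (t::real, q) \<in> C}"
proof -
  assume "closed C"
  moreover have "\<And>x. isCont (\<lambda>q::real. (t::real, q)) x" by (intro continuous_intros)
  ultimately have "closed ((\<lambda>q. (t,q)) -` C)" by (rule continuous_closed_vimage)
  then show ?thesis by (simp add: vimage_def)
qed

lemma small_step: "(0::real) < e \<Longrightarrow> a < b \<Longrightarrow> 0 < min (e/2) ((b-a)/2) \<and> min (e/2) ((b-a)/2) < e \<and> a + min (e/2) ((b-a)/2) < b"
  by (simp add: min_def field_simps)

lemma lt_pt_iff: "lt_pt (a,b) (c,d) \<longleftrightarrow> a < c \<and> b < d" by (simp add: lt_pt_def)

lemma IVT_line:
  assumes cp: "classical_pref R" and z: "z \<in> Zset" and ab: "0 \<le> a" "a \<le> b" and q: "0 \<le> q" "q \<le> 1"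
    and Ra: "R (a,q) z" and Rb: "R z (b,q)"
  shows "\<exists>t\<in>{a..b}. indiff R (t,q) z"
proof -
  define T where "T = {a..b} \<inter> {t. (t,q) \<in> {x\<in>Zset. R x z}}"
  have cT: "closed T" unfolding T_def
    by (intro closed_Int closed_real_atLeastAtMost closed_line cp_closed_up[OF cp z])
  have aT: "a \<in> T" using Ra ab q unfolding T_def by auto
  have bdd: "bdd_above T" unfolding T_def by (auto intro: bdd_aboveI[of _ b])
  define s where "s = Sup T"
  have sT: "s \<in> T" unfolding s_def using closed_contains_Sup[OF _ bdd cT] aT by blast
  have s_ge: "\<And>t. t \<in> T \<Longrightarrow> t \<le> s" unfolding s_def using bdd by (simp add: cSup_upper)
  have Rs: "R (s,q) z" "a \<le> s" "s \<le> b" using sT unfolding T_def by auto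
  have sZ: "(s,q) \<in> Zset" using Rs ab q by auto
  have "R z (s,q)"
  proof (rule ccontr)
    assume nR: "\<not> R z (s,q)"
    then have "s \<noteq> b" using Rb by auto
    then have sb: "s < b" using Rs by auto
    obtain e where e: "e > 0" "\<forall>y\<in>Zset. dist y (s,q) < e \<longrightarrow> \<not> R z y"
      using cp_open_snd[OF cp z nR sZ] by blast
    define d where "d = min (e/2) ((b - s)/2)"
    have d: "d > 0" "d < e" "s + d \<le> b" using small_step[OF e(1) sb] unfolding d_def by auto
    have "(s+d,q) \<in> Zset" using sZ d by auto
    moreover have "dist (s+d,q) (s,q) < e" using d by simp
    ultimately have "\<not> R z (s+d,q)" using e by blast
    then have "R (s+d,q) z" using cp_total[OF cp z \<open>(s+d,q) \<in> Zset\<close>] by blast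
    then have "s + d \<in> T" using d Rs \<open>(s+d,q) \<in> Zset\<close> unfolding T_def by auto
    then show False using s_ge d by force
  qed
  then show ?thesis using Rs unfolding indiff_def by auto
qed


lemma dist_le_sum: "dist (x::pt) y \<le> \<bar>fst x - fst y\<bar> + \<bar>snd x - snd y\<bar>"
proof -
  have "dist x y = sqrt ((dist (fst x) (fst y))\<^sup>2 + (dist (snd x) (snd y))\<^sup>2)"
    by (cases x, cases y) (simp add: dist_Pair_Pair)
  also have "\<dots> \<le> \<bar>dist (fst x) (fst y)\<bar> + \<bar>dist (snd x) (snd y)\<bar>" by (rule sqrt_sum_squares_le_sum_abs)
  finally show ?thesis by (simp add: dist_real_def)
qed

lemma fst_close: "dist (y::pt) x < e \<Longrightarrow> \<bar>fst y - fst x\<bar> < e"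
  using dist_fst_le[of y x] by (simp add: dist_real_def)
lemma snd_close: "dist (y::pt) x < e \<Longrightarrow> \<bar>snd y - snd x\<bar> < e"
  using dist_snd_le[of y x] by (simp add: dist_real_def)

lemma rat_approx:
  assumes p: "p \<in> Zset" and e: "e > 0"
  shows "\<exists>r\<in>Zset. fst r \<in> \<rat> \<and> snd r \<in> \<rat> \<and> dist r p < e"
proof -
  obtain t q where pp: "p = (t,q)" by (cases p)
  have tq: "0 \<le> t" "0 \<le> q" "q \<le> 1" using p pp by auto
  obtain r1 where r1: "r1 \<in> \<rat>" "t < r1" "r1 < t + e/2" using Rats_dense_in_real[of t "t + e/2"] e by auto
  obtain r2 where r2: "r2 \<in> \<rat>" "0 \<le> r2" "r2 \<le> q" "q - e/2 < r2"
  proof (cases "q = 0")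
    case True then show ?thesis using that[of 0] e by auto
  next
    case False
    then obtain r where "r \<in> \<rat>" "max 0 (q - e/2) < r" "r < q"
      using Rats_dense_in_real[of "max 0 (q - e/2)" q] tq e by auto
    then show ?thesis using that[of r] by auto
  qed
  have "dist (r1,r2) p \<le> \<bar>r1 - t\<bar> + \<bar>r2 - q\<bar>" using dist_le_sum[of "(r1,r2)" p] pp by simp
  also have "\<dots> < e" using r1 r2 by auto
  finally have "dist (r1,r2) p < e" .
  moreover have "(r1,r2) \<in> Zset" using r1 r2 tq by auto
  ultimately show ?thesis using r1 r2 by (intro bexI[of _ "(r1,r2)"]) auto
qed

lemma seq_approach:
  fixes lt :: "'a \<Rightarrow> 'a \<Rightarrow> bool"
  assumes trans: "\<And>a b c. a\<in>D \<Longrightarrow> b\<in>D \<Longrightarrow> c\<in>D \<Longrightarrow> lt a b \<Longrightarrow> lt b c \<Longrightarrow> lt a c"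
    and total: "\<And>a b. a\<in>D \<Longrightarrow> b\<in>D \<Longrightarrow> a \<noteq> b \<Longrightarrow> lt a b \<or> lt b a"
    and CD: "C \<subseteq> D" "countable C"
    and dense: "\<And>a b. a\<in>D \<Longrightarrow> b\<in>D \<Longrightarrow> lt a b \<Longrightarrow> (\<exists>c\<in>C. lt a c \<and> lt c b)"
    and s: "s\<in>D" "T\<in>D" "lt s T"
  shows "\<exists>S. (\<forall>n. S n \<in> D \<and> lt s (S n) \<and> lt (S n) T) \<and> (\<forall>n. S (Suc n) = S n \<or> lt (S (Suc n)) (S n))
     \<and> (\<forall>b\<in>D. lt s b \<longrightarrow> (\<forall>\<^sub>F n in sequentially. lt (S n) b))"
proof -
  define Cs where "Cs = {c\<in>C. lt s c \<and> lt c T}"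
  have Csne: "Cs \<noteq> {}" using dense[OF s] unfolding Cs_def by auto
  have Csc: "countable Cs" using CD unfolding Cs_def by auto
  define e where "e = from_nat_into Cs"
  have eCs: "\<And>n. e n \<in> Cs" unfolding e_def using from_nat_into[OF Csne] by auto
  have range_e: "range e = Cs" unfolding e_def using range_from_nat_into[OF Csne Csc] .
  define m where "m = rec_nat (e 0) (\<lambda>n mn. if lt (e (Suc n)) mn then e (Suc n) else mn)"
  have m0: "m 0 = e 0" unfolding m_def by simp
  have mS: "\<And>n. m (Suc n) = (if lt (e (Suc n)) (m n) then e (Suc n) else m n)" unfolding m_def by simp
  have mCs: "\<And>n. m n \<in> Cs"
  proof -
    fix n show "m n \<in> Cs" by (induction n) (auto simp: m0 mS eCs)
  qed
  have mD: "\<And>n. m n \<in> D" using mCs CD unfolding Cs_def by auto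
  have eD: "\<And>n. e n \<in> D" using eCs CD unfolding Cs_def by auto
  have mle: "\<And>n k. k \<le> n \<Longrightarrow> m n = e k \<or> lt (m n) (e k)"
  proof -
    fix n show "\<And>k. k \<le> n \<Longrightarrow> m n = e k \<or> lt (m n) (e k)"
    proof (induction n)
      case 0 then show ?case by (simp add: m0)
    next
      case (Suc n)
      show ?case
      proof (cases "k = Suc n")
        case True
        then show ?thesis using total[OF mD eD, of n "Suc n"] by (auto simp: mS)
      next
        case False
        then have "k \<le> n" using Suc by auto
        then have IH: "m n = e k \<or> lt (m n) (e k)" using Suc.IH by blast
        show ?thesis
        proof (cases "lt (e (Suc n)) (m n)")
          case True
          then show ?thesis using IH trans[OF eD mD eD, of "Suc n" n k] by (auto simp: mS)
        next
          case False
          then show ?thesis using IH by (auto simp: mS)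
        qed
      qed
    qed
  qed
  show ?thesis
  proof (intro exI[of _ m] conjI allI ballI impI)
    fix n show "m n \<in> D" "lt s (m n)" "lt (m n) T" using mCs mD unfolding Cs_def by auto
  next
    fix n show "m (Suc n) = m n \<or> lt (m (Suc n)) (m n)" by (auto simp: mS)
  next
    fix b assume b: "b \<in> D" "lt s b"
    define b' where "b' = (if lt b T then b else T)"
    have b'D: "b' \<in> D" using b s unfolding b'_def by auto
    have sb': "lt s b'" using b s unfolding b'_def by auto
    have b'b: "b' = b \<or> lt b' b" using total[OF b(1) s(2)] unfolding b'_def by auto
    obtain c where c: "c \<in> C" "lt s c" "lt c b'" using dense[OF s(1) b'D sb'] by blast
    have cT: "lt c T"
      using c b'b CD s b b'D unfolding b'_def by (cases "lt b T") (auto intro: trans)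
    then have "c \<in> Cs" using c unfolding Cs_def by auto
    then obtain k where k: "c = e k" using range_e by blast
    have cD: "c \<in> D" using c CD by auto
    have cb: "lt c b" using b'b c b b'D cD trans by blast
    show "\<forall>\<^sub>F n in sequentially. lt (m n) b"
      unfolding eventually_sequentially
    proof (intro exI[of _ k] allI impI)
      fix n assume "k \<le> n"
      then have "m n = c \<or> lt (m n) c" using mle k by blast
      then show "lt (m n) b" using cb trans[OF mD cD b(1)] by blast
    qed
  qed
qed

locale dom =
  fixes D :: "pref set"
  assumes rsc: "rich_single_crossing D"
begin

lemma dcp: "R \<in> D \<Longrightarrow> classical_pref R"
  using rsc unfolding rich_single_crossing_def by blast

lemma drich: "x1 \<in> Zset \<Longrightarrow> x2 \<in> Zset \<Longrightarrow> lt_pt x1 x2 \<Longrightarrow> \<exists>R\<in>D. indiff R x1 x2"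
  using rsc unfolding rich_single_crossing_def by blast

lemma dsc: assumes "R1 \<in> D" "R2 \<in> D" "R1 \<noteq> R2" "x \<in> Zset" "z \<in> Zset"
    "indiff R1 x z" "indiff R2 x z" shows "x = z"
proof -
  have sc: "single_crossing R1 R2" using rsc assms unfolding rich_single_crossing_def by blast
  have "indiff R1 z z" "indiff R2 z z" using assms cp_refl[OF dcp[OF assms(1)] assms(5)]
    cp_refl[OF dcp[OF assms(2)] assms(5)] unfolding indiff_def by auto
  then show ?thesis using sc assms unfolding single_crossing_def indiff_set_def by blast
qed

lemma prec_weak: assumes "prec R1 R2" "z \<in> Zset" "x \<in> Zset" "lt_pt x z" "R2 x z"
  shows "R1 x z"
  using assms unfolding prec_def box_pt_def le_pt_def by blast

lemma SCL1: assumes D: "R1 \<in> D" "R2 \<in> D" and p: "prec R1 R2" and Z: "x \<in> Zset" "z \<in> Zset"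
  and lt: "lt_pt x z" and R1: "R1 z x" shows "strict R2 z x"
proof (cases "R1 x z")
  case False
  then have "\<not> R2 x z" using prec_weak[OF p Z(2,1) lt] by blast
  then show ?thesis using not_R_strict[OF dcp[OF D(2)] Z] by blast
next
  case True
  have cp1: "classical_pref R1" and cp2: "classical_pref R2" using dcp D by auto
  show ?thesis
  proof (rule ccontr)
    assume ns: "\<not> strict R2 z x"
    have R2xz: "R2 x z" using ns cp_total[OF cp2 Z] unfolding strict_def by blast
    show False
    proof (cases "R2 z x")
      case True
      have "x = z" using dsc[OF D _ Z] True R2xz R1 \<open>R1 x z\<close> p unfolding indiff_def prec_def by blast
      then show False using lt unfolding lt_pt_def by auto
    next
      case False
      obtain e where e: "e > 0" "\<forall>y\<in>Zset. dist y x < e \<longrightarrow> \<not> R2 z y"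
        using cp_open_snd[OF cp2 Z(2) False Z(1)] by blast
      obtain t1 q1 where x: "x = (t1,q1)" by (cases x)
      obtain t2 q2 where zz: "z = (t2,q2)" by (cases z)
      have ltq: "t1 < t2" "q1 < q2" using lt unfolding x zz lt_pt_def by auto
      define d where "d = min (e/2) ((t2 - t1)/2)"
      have d: "d > 0" "d < e" "t1 + d < t2" using small_step[OF e(1) ltq(1)] unfolding d_def by auto
      define y where "y = (t1 + d, q1)"
      have yZ: "y \<in> Zset" using Z d unfolding x y_def by auto
      have "dist y x < e" using d unfolding y_def x by simp
      then have "\<not> R2 z y" using e yZ by blast
      then have "R2 y z" using cp_total[OF cp2 Z(2) yZ] by blast
      moreover have "lt_pt y z" using d ltq unfolding y_def zz lt_pt_def by auto
      ultimately have "R1 y z" using prec_weak[OF p Z(2) yZ] by blast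
      moreover have "strict R1 x y" using cp_t[OF cp1, of t1 q1 "t1+d"] Z yZ d unfolding x y_def by auto
      ultimately show False using R1 cp_trans[OF cp1] unfolding strict_def by blast
    qed
  qed
qed

lemma SCL2: assumes D: "R1 \<in> D" "R2 \<in> D" and p: "prec R1 R2" and Z: "x \<in> Zset" "z \<in> Zset"
  and lt: "lt_pt x z" and R2: "R2 x z" shows "strict R1 x z"
proof -
  have "R1 x z" using prec_weak[OF p Z(2,1) lt R2] .
  moreover have "\<not> R1 z x" using SCL1[OF D p Z lt] R2 unfolding strict_def by blast
  ultimately show ?thesis unfolding strict_def by blast
qed


lemma lemQ:
  assumes D: "Ra \<in> D" "Rb \<in> D" "Ra \<noteq> Rb" and z: "z \<in> Zset" and q: "0 \<le> q" "q < snd z"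
    and t0: "0 \<le> t0" "strict Ra (t0,q) z"
    and hyp: "\<And>t. 0 \<le> t \<Longrightarrow> (strict Ra (t,q) z \<longrightarrow> Rb (t,q) z) \<and> (strict Rb (t,q) z \<longrightarrow> Ra (t,q) z)"
  shows False
proof -
  have cpa: "classical_pref Ra" and cpb: "classical_pref Rb" using D dcp by auto
  obtain tz qz where zz: "z = (tz,qz)" by (cases z)
  have qz: "q < qz" "qz \<le> 1" "0 \<le> tz" using q z zz by auto
  have lineZ: "\<And>t. 0 \<le> t \<Longrightarrow> (t,q) \<in> Zset" using qz q by auto
  define S where "S = {t. 0 \<le> t \<and> strict Ra (t,q) z}"
  have Sne: "S \<noteq> {}" using t0 unfolding S_def by auto
  have Sb: "\<And>t. t \<in> S \<Longrightarrow> t < tz"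
  proof (rule ccontr)
    fix t assume "t \<in> S" "\<not> t < tz"
    then have "strict Ra z (t,q)" unfolding zz using cp_smono[OF cpa, of tz qz t q] qz q lineZ by auto
    then show False using \<open>t \<in> S\<close> unfolding S_def strict_def by auto
  qed
  have bdd: "bdd_above S" using Sb by (meson bdd_aboveI less_imp_le)
  define w where "w = Sup S"
  have w0: "t0 \<le> w" unfolding w_def using t0 bdd by (auto intro: cSup_upper simp: S_def)
  have wZ: "(w,q) \<in> Zset" using w0 t0 lineZ by auto
  have wcl: "w \<in> closure S" unfolding w_def using closure_contains_Sup[OF Sne bdd] .
  have "closure S \<subseteq> {t. (t,q) \<in> {x\<in>Zset. Ra x z}}"
  proof (rule closure_minimal)
    show "S \<subseteq> {t. (t,q) \<in> {x\<in>Zset. Ra x z}}" using lineZ unfolding S_def strict_def by blast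
  qed (rule closed_line[OF cp_closed_up[OF cpa z]])
  then have Raw: "Ra (w,q) z" using wcl by auto
  have "closure S \<subseteq> {t. (t,q) \<in> {x\<in>Zset. Rb x z}}"
  proof (rule closure_minimal)
    show "S \<subseteq> {t. (t,q) \<in> {x\<in>Zset. Rb x z}}" using lineZ hyp unfolding S_def by blast
  qed (rule closed_line[OF cp_closed_up[OF cpb z]])
  then have Rbw: "Rb (w,q) z" using wcl by auto
  have Raw2: "Ra z (w,q)"
  proof (rule ccontr)
    assume nR: "\<not> Ra z (w,q)"
    obtain e where e: "e > 0" "\<forall>y\<in>Zset. dist y (w,q) < e \<longrightarrow> \<not> Ra z y"
      using cp_open_snd[OF cpa z nR wZ] by blast
    have "(w + e/2, q) \<in> Zset" using wZ e by auto
    moreover have "dist (w + e/2, q) (w,q) < e" using e by simp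
    ultimately have "\<not> Ra z (w + e/2, q)" using e by blast
    then have "strict Ra (w + e/2, q) z" using not_R_strict[OF cpa z \<open>(w + e/2, q) \<in> Zset\<close>] by blast
    then have "w + e/2 \<in> S" using w0 t0 e unfolding S_def by auto
    then have "w + e/2 \<le> w" unfolding w_def using bdd by (rule cSup_upper)
    then show False using e by auto
  qed
  have "{w<..} \<subseteq> {t. (t,q) \<in> {x\<in>Zset. Rb z x}}"
  proof
    fix t assume "t \<in> {w<..}"
    then have tw: "w < t" by auto
    have tZ: "(t,q) \<in> Zset" using tw w0 t0 lineZ by auto
    have "strict Ra (w,q) (t,q)" using cp_t[OF cpa wZ tZ tw] .
    then have "strict Ra z (t,q)" using strict_trans2[OF cpa Raw2] by blast
    then have "\<not> Ra (t,q) z" unfolding strict_def by blast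
    then have "\<not> strict Rb (t,q) z" using hyp[of t] tw w0 t0 by auto
    then have "Rb z (t,q)" using cp_total[OF cpb tZ z] unfolding strict_def by blast
    then show "t \<in> {t. (t,q) \<in> {x\<in>Zset. Rb z x}}" using tZ by auto
  qed
  then have "closure {w<..} \<subseteq> {t. (t,q) \<in> {x\<in>Zset. Rb z x}}"
    by (intro closure_minimal closed_line cp_closed_lo[OF cpb z])
  then have Rbw2: "Rb z (w,q)" by auto
  have "(w,q) = z" using dsc[OF D wZ z] Raw Raw2 Rbw Rbw2 unfolding indiff_def by blast
  then show False using qz zz by auto
qed

definition U :: "pref \<Rightarrow> pref \<Rightarrow> pt \<Rightarrow> bool" where
  "U Ra Rb z \<longleftrightarrow> (\<exists>x\<in>Zset. snd x < snd z \<and> strict Ra x z \<and> \<not> Rb x z)"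

lemma U_some:
  assumes D: "R1 \<in> D" "R2 \<in> D" "R1 \<noteq> R2" and z: "z \<in> Zset" "0 < fst z" "0 < snd z"
  shows "U R1 R2 z \<or> U R2 R1 z"
proof (rule ccontr)
  assume nU: "\<not> (U R1 R2 z \<or> U R2 R1 z)"
  have cp1: "classical_pref R1" using D dcp by auto
  obtain tz qz where zz: "z = (tz,qz)" by (cases z)
  have "strict R1 (0,qz) z" unfolding zz using cp_smono[OF cp1, of 0 qz tz qz] z zz by auto
  then have nR: "\<not> R1 z (0,qz)" unfolding strict_def by auto
  obtain e where e: "e > 0" "\<forall>y\<in>Zset. dist y (0,qz) < e \<longrightarrow> \<not> R1 z y"
    using cp_open_snd[OF cp1 z(1) nR] z zz by auto
  define d where "d = min (e/2) ((qz - 0)/2)"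
  have d: "0 < d" "d < e" "0 + d < qz" using small_step[OF e(1), of 0 qz] z zz unfolding d_def by auto
  have yZ: "(0, qz - d) \<in> Zset" using d z zz by auto
  have "dist (0::real, qz - d) (0,qz) < e" using d by simp
  then have "\<not> R1 z (0, qz - d)" using e yZ by blast
  then have st: "strict R1 (0, qz - d) z" using not_R_strict[OF cp1 z(1) yZ] by blast
  show False
  proof (rule lemQ[OF D z(1) _ _ _ st])
    show "0 \<le> qz - d" "qz - d < snd z" using d zz by auto
    fix t :: real assume t: "0 \<le> t"
    have "(t, qz - d) \<in> Zset" using t yZ by auto
    moreover have "snd (t, qz - d) < snd z" using d zz by auto
    ultimately show "(strict R1 (t, qz - d) z \<longrightarrow> R2 (t, qz - d) z) \<and> (strict R2 (t, qz - d) z \<longrightarrow> R1 (t, qz - d) z)"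
      using nU unfolding U_def by blast
  qed auto
qed

lemma U_excl:
  assumes D: "R1 \<in> D" "R2 \<in> D" "R1 \<noteq> R2" and z: "z \<in> Zset"
    and U1: "U R2 R1 z" and U2: "U R1 R2 z"
  shows False
proof -
  have cp1: "classical_pref R1" and cp2: "classical_pref R2" using D dcp by auto
  obtain x1 where x1: "x1 \<in> Zset" "snd x1 < snd z" "strict R2 x1 z" "\<not> R1 x1 z" using U1 unfolding U_def by blast
  obtain x2 where x2: "x2 \<in> Zset" "snd x2 < snd z" "strict R1 x2 z" "\<not> R2 x2 z" using U2 unfolding U_def by blast
  obtain t1 q1 where xx1: "x1 = (t1,q1)" by (cases x1)
  obtain t2 q2 where xx2: "x2 = (t2,q2)" by (cases x2)
  define lo where "lo = min q1 q2"
  define hi where "hi = max q1 q2"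
  have lohi: "0 \<le> lo" "lo \<le> hi" "hi < snd z" "snd z \<le> 1"
    using x1 x2 z xx1 xx2 unfolding lo_def hi_def by (auto simp: Zset_iff')
  define Oa where "Oa = {q \<in> {lo..hi}. \<exists>t\<ge>0. strict R2 (t,q) z \<and> \<not> R1 (t,q) z}"
  define Ob where "Ob = {q \<in> {lo..hi}. \<exists>t\<ge>0. strict R1 (t,q) z \<and> \<not> R2 (t,q) z}"
  have inZ: "\<And>t q. 0 \<le> t \<Longrightarrow> q \<in> {lo..hi} \<Longrightarrow> (t,q) \<in> Zset" using lohi by auto
  have q1a: "q1 \<in> Oa" unfolding Oa_def lo_def hi_def using x1 xx1 by auto
  have q2b: "q2 \<in> Ob" unfolding Ob_def lo_def hi_def using x2 xx2 by auto
  have disj: "Oa \<inter> Ob = {}"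
  proof (rule ccontr)
    assume "Oa \<inter> Ob \<noteq> {}"
    then obtain q t t' where q: "q \<in> {lo..hi}" "0 \<le> t" "strict R2 (t,q) z" "\<not> R1 (t,q) z"
      "0 \<le> t'" "strict R1 (t',q) z" "\<not> R2 (t',q) z" unfolding Oa_def Ob_def by blast
    show False
    proof (cases "t \<le> t'")
      case True
      have "R1 (t,q) (t',q)" using cp_mono[OF cp1] inZ q True by auto
      then show False using q cp_trans[OF cp1] unfolding strict_def by blast
    next
      case False
      have "R2 (t',q) (t,q)" using cp_mono[OF cp2] inZ q False by auto
      then show False using q cp_trans[OF cp2] unfolding strict_def by blast
    qed
  qed
  have opn: "openin (top_of_set {lo..hi}) Oset"
    if Odef: "Oset = {q \<in> {lo..hi}. \<exists>t\<ge>0. strict Ra (t,q) z \<and> \<not> Rb (t,q) z}"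
      and cpa: "classical_pref Ra" and cpb: "classical_pref Rb" for Oset Ra Rb
    unfolding openin_euclidean_subtopology_iff
  proof (intro conjI ballI)
    show "Oset \<subseteq> {lo..hi}" using Odef by auto
    fix q assume "q \<in> Oset"
    then obtain t where t: "q \<in> {lo..hi}" "0 \<le> t" "strict Ra (t,q) z" "\<not> Rb (t,q) z" using Odef by blast
    have tq: "(t,q) \<in> Zset" using inZ t by auto
    obtain e1 where e1: "e1 > 0" "\<forall>y\<in>Zset. dist y (t,q) < e1 \<longrightarrow> \<not> Ra z y"
      using cp_open_snd[OF cpa z _ tq] t unfolding strict_def by blast
    obtain e2 where e2: "e2 > 0" "\<forall>y\<in>Zset. dist y (t,q) < e2 \<longrightarrow> \<not> Rb y z"
      using cp_open_fst[OF cpb z t(4) tq] by blast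
    show "\<exists>e>0. \<forall>x'\<in>{lo..hi}. dist x' q < e \<longrightarrow> x' \<in> Oset"
    proof (intro exI[of _ "min e1 e2"] conjI ballI impI)
      show "0 < min e1 e2" using e1 e2 by auto
      fix q' assume q': "q' \<in> {lo..hi}" "dist q' q < min e1 e2"
      have tq': "(t,q') \<in> Zset" using inZ q' t by auto
      have "dist (t,q') (t,q) < min e1 e2" using q' by (simp add: dist_real_def)
      then have "\<not> Ra z (t,q')" "\<not> Rb (t,q') z" using e1 e2 tq' by auto
      then show "q' \<in> Oset" using Odef q' t not_R_strict[OF cpa z tq'] by blast
    qed
  qed
  have "connected {lo..hi}" by simp
  then obtain qs where qs: "qs \<in> {lo..hi}" "qs \<notin> Oa" "qs \<notin> Ob"
    using opn[OF Oa_def cp2 cp1] opn[OF Ob_def cp1 cp2] disj q1a q2b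
    unfolding connected_openin by blast
  have hyp: "\<And>t. 0 \<le> t \<Longrightarrow> (strict R1 (t,qs) z \<longrightarrow> R2 (t,qs) z) \<and> (strict R2 (t,qs) z \<longrightarrow> R1 (t,qs) z)"
    using qs unfolding Oa_def Ob_def by blast
  have qsz: "0 \<le> qs" "qs < snd z" using qs lohi by auto
  show False
  proof (cases "q1 \<le> q2")
    case True
    then have "q1 \<le> qs" using qs unfolding lo_def by auto
    then have "R2 (t1,qs) (t1,q1)" using cp_mono[OF cp2] inZ qs x1 xx1 by auto
    then have "strict R2 (t1,qs) z" using strict_trans2[OF cp2] x1 xx1 by blast
    then show False using lemQ[OF D(2,1) _ z qsz, of t1] hyp x1 xx1 D by auto
  next
    case False
    then have "q2 \<le> qs" using qs unfolding lo_def by auto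
    then have "R1 (t2,qs) (t2,q2)" using cp_mono[OF cp1] inZ qs x2 xx2 by auto
    then have "strict R1 (t2,qs) z" using strict_trans2[OF cp1] x2 xx2 by blast
    then show False using lemQ[OF D(1,2,3) z qsz, of t2] hyp x2 xx2 by auto
  qed
qed

lemma notprec_U:
  assumes D: "R1 \<in> D" "R2 \<in> D" "R1 \<noteq> R2" and np: "\<not> prec R1 R2"
  shows "\<exists>z\<in>Zset. 0 < fst z \<and> 0 < snd z \<and> U R2 R1 z"
proof -
  have cp1: "classical_pref R1" and cp2: "classical_pref R2" using D dcp by auto
  obtain z x where zx: "z \<in> Zset" "x \<in> box_pt z" "R2 x z" "\<not> R1 x z"
    using np D(3) unfolding prec_def by blast
  have xZ: "x \<in> Zset" and le: "le_pt x z" using zx unfolding box_pt_def by auto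
  have "x \<noteq> z" using zx cp_refl[OF cp1 zx(1)] by auto
  then have lt: "lt_pt x z" using le unfolding le_pt_def by auto
  obtain t1 q1 where xx: "x = (t1,q1)" by (cases x)
  obtain tz qz where zz: "z = (tz,qz)" by (cases z)
  have ltq: "t1 < tz" "q1 < qz" using lt xx zz unfolding lt_pt_def by auto
  obtain e where e: "e > 0" "\<forall>y\<in>Zset. dist y x < e \<longrightarrow> \<not> R1 y z"
    using cp_open_fst[OF cp1 zx(1) zx(4) xZ] by blast
  define d where "d = min (e/2) ((qz - q1)/2)"
  have d: "0 < d" "d < e" "q1 + d < qz" using small_step[OF e(1) ltq(2)] unfolding d_def by auto
  define y where "y = (t1, q1 + d)"
  have yZ: "y \<in> Zset" using xZ zx(1) d unfolding y_def xx zz by auto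
  have "dist y x < e" using d unfolding y_def xx by simp
  then have "\<not> R1 y z" using e yZ by blast
  moreover have "strict R2 (t1,q1+d) (t1,q1)" using cp_q[OF cp2, of t1 q1 "q1+d"] xZ yZ d unfolding y_def xx by auto
  then have "strict R2 y z" using strict_trans1[OF cp2 _ zx(3)] unfolding y_def xx by auto
  moreover have "snd y < snd z" using d unfolding y_def zz by auto
  ultimately have "U R2 R1 z" using yZ unfolding U_def by blast
  moreover have "0 < fst z" "0 < snd z" using ltq xZ xx zz by auto
  ultimately show ?thesis using zx(1) by blast
qed

lemma U_open:
  assumes D: "Ra \<in> D" "Rb \<in> D" and Z': "Z' \<subseteq> Zset"
  shows "openin (top_of_set Z') {z\<in>Z'. U Ra Rb z}"
  unfolding openin_euclidean_subtopology_iff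
proof (intro conjI ballI)
  show "{z\<in>Z'. U Ra Rb z} \<subseteq> Z'" by auto
  have cpa: "classical_pref Ra" and cpb: "classical_pref Rb" using D dcp by auto
  fix z assume "z \<in> {z\<in>Z'. U Ra Rb z}"
  then have z: "z \<in> Z'" "z \<in> Zset" and "U Ra Rb z" using Z' by auto
  then obtain x where x: "x \<in> Zset" "snd x < snd z" "strict Ra x z" "\<not> Rb x z" unfolding U_def by blast
  obtain e1 where e1: "e1 > 0" "\<forall>y\<in>Zset. dist y z < e1 \<longrightarrow> \<not> Ra y x"
    using cp_open_fst[OF cpa x(1) _ z(2)] x(3) unfolding strict_def by blast
  obtain e2 where e2: "e2 > 0" "\<forall>y\<in>Zset. dist y z < e2 \<longrightarrow> \<not> Rb x y"
    using cp_open_snd[OF cpb x(1) x(4) z(2)] by blast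
  define e where "e = min (min e1 e2) (snd z - snd x)"
  have e: "e > 0" using e1 e2 x unfolding e_def by auto
  show "\<exists>e>0. \<forall>x'\<in>Z'. dist x' z < e \<longrightarrow> x' \<in> {z\<in>Z'. U Ra Rb z}"
  proof (intro exI[of _ e] conjI ballI impI)
    show "e > 0" by (rule e)
    fix y assume y: "y \<in> Z'" "dist y z < e"
    have yZ: "y \<in> Zset" using y Z' by auto
    have "\<not> Ra y x" "\<not> Rb x y" using e1 e2 y yZ unfolding e_def by auto
    moreover have "dist (snd y) (snd z) < snd z - snd x"
      using dist_snd_le[of y z] y unfolding e_def by linarith
    then have "snd x < snd y" by (simp add: dist_real_def)
    ultimately have "U Ra Rb y" using x yZ not_R_strict[OF cpa yZ x(1)] unfolding U_def by blast
    then show "y \<in> {z\<in>Z'. U Ra Rb z}" using y by auto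
  qed
qed

lemma prec_total:
  assumes D: "R1 \<in> D" "R2 \<in> D" "R1 \<noteq> R2"
  shows "prec R1 R2 \<or> prec R2 R1"
proof (rule ccontr)
  assume "\<not> (prec R1 R2 \<or> prec R2 R1)"
  then obtain z1 z2 where z1: "z1\<in>Zset" "0 < fst z1" "0 < snd z1" "U R2 R1 z1"
    and z2: "z2\<in>Zset" "0 < fst z2" "0 < snd z2" "U R1 R2 z2"
    using notprec_U[OF D] notprec_U[OF D(2,1) D(3)[symmetric]] by blast
  define Z' where "Z' = {0::real<..} \<times> {0<..(1::real)}"
  have Z'Z: "Z' \<subseteq> Zset" unfolding Z'_def by auto
  have "convex Z'" unfolding Z'_def by (intro convex_Times convex_real_interval)
  then have con: "connected Z'" by (rule convex_connected)
  have memZ': "\<And>z. z \<in> Zset \<Longrightarrow> 0 < fst z \<Longrightarrow> 0 < snd z \<Longrightarrow> z \<in> Z'"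
    unfolding Z'_def by (auto simp: Zset_iff')
  have o1: "openin (top_of_set Z') {z\<in>Z'. U R2 R1 z}" by (rule U_open[OF D(2,1) Z'Z])
  have o2: "openin (top_of_set Z') {z\<in>Z'. U R1 R2 z}" by (rule U_open[OF D(1,2) Z'Z])
  have cov: "Z' \<subseteq> {z\<in>Z'. U R2 R1 z} \<union> {z\<in>Z'. U R1 R2 z}"
  proof
    fix z assume "z \<in> Z'"
    then have "z \<in> Zset" "0 < fst z" "0 < snd z" using Z'Z unfolding Z'_def by auto
    then show "z \<in> {z\<in>Z'. U R2 R1 z} \<union> {z\<in>Z'. U R1 R2 z}" using U_some[OF D] \<open>z \<in> Z'\<close> by blast
  qed
  have dj: "{z\<in>Z'. U R2 R1 z} \<inter> {z\<in>Z'. U R1 R2 z} = {}"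
    using U_excl[OF D] Z'Z by blast
  show False using con o1 o2 cov dj memZ'[OF z1(1-3)] memZ'[OF z2(1-3)] z1(4) z2(4)
    unfolding connected_openin by blast
qed

lemma indiff_pair:
  assumes cp: "classical_pref R"
  shows "\<exists>x\<in>Zset. lt_pt x (1,1) \<and> indiff R x (1,1)"
proof -
  have z: "(1::real,1::real) \<in> Zset" by simp
  have "strict R (0,1) (1,1)" using cp_t[OF cp, of 0 1 1] by simp
  then have nR: "\<not> R (1,1) (0,1)" unfolding strict_def by auto
  obtain e where e: "e > 0" "\<forall>y\<in>Zset. dist y (0,1) < e \<longrightarrow> \<not> R (1,1) y"
    using cp_open_snd[OF cp z nR] by auto
  define d where "d = min (e/2) ((1 - 0)/2)"
  have d: "0 < d" "d < e" "0 + d < (1::real)" using small_step[OF e(1), of 0 1] unfolding d_def by auto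
  have yZ: "(0, 1 - d) \<in> Zset" using d by auto
  have "dist (0::real, 1 - d) (0,1) < e" using d by simp
  then have "\<not> R (1,1) (0, 1 - d)" using e yZ by blast
  then have Ra: "R (0,1-d) (1,1)" using cp_total[OF cp z yZ] by blast
  have Rb: "R (1,1) (1,1-d)" using cp_mono[OF cp, of 1 1 1 "1-d"] d by auto
  obtain t where t: "t \<in> {0..1}" "indiff R (t,1-d) (1,1)"
    using IVT_line[OF cp z _ _ _ _ Ra Rb] d by auto
  have "t \<noteq> 1"
  proof
    assume "t = 1"
    then have "strict R (1,1) (t,1-d)" using cp_q[OF cp, of 1 "1-d" 1] d by auto
    then show False using t unfolding strict_def indiff_def by auto
  qed
  then have "lt_pt (t,1-d) (1,1)" using t d unfolding lt_pt_def by auto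
  then show ?thesis using t d by auto
qed

lemma prec_asym: assumes D: "R1 \<in> D" "R2 \<in> D" and p: "prec R1 R2" "prec R2 R1" shows False
proof -
  obtain x where x: "x \<in> Zset" "lt_pt x (1,1)" "indiff R1 x (1,1)" using indiff_pair[OF dcp[OF D(1)]] by blast
  have z: "(1::real,1::real) \<in> Zset" by simp
  have "strict R2 (1,1) x" using SCL1[OF D p(1) x(1) z x(2)] x(3) unfolding indiff_def by blast
  moreover have "strict R2 x (1,1)" using SCL2[OF D(2,1) p(2) x(1) z x(2)] x(3) unfolding indiff_def by blast
  ultimately show False unfolding strict_def by blast
qed

lemma prec_trans: assumes D: "R1 \<in> D" "R2 \<in> D" "R3 \<in> D" and p: "prec R1 R2" "prec R2 R3"
  shows "prec R1 R3"
proof -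
  have "R1 \<noteq> R3" using prec_asym[OF D(1,2) p(1)] p(2) by auto
  then show ?thesis using p unfolding prec_def by blast
qed

lemma prec_irrefl: "\<not> prec R R" unfolding prec_def by auto

lemma split_pair:
  assumes D: "R \<in> D" "R' \<in> D" and p: "prec R R'"
  shows "\<exists>x z. x \<in> Zset \<and> z \<in> Zset \<and> lt_pt x z \<and> strict R x z \<and> strict R' z x"
proof -
  have cp: "classical_pref R" and cp': "classical_pref R'" using D dcp by auto
  obtain x where x: "x \<in> Zset" "lt_pt x (1,1)" "indiff R x (1,1)" using indiff_pair[OF cp] by blast
  have z: "(1::real,1::real) \<in> Zset" by simp
  have s': "strict R' (1,1) x" using SCL1[OF D p x(1) z x(2)] x(3) unfolding indiff_def by blast
  then have nR: "\<not> R' x (1,1)" unfolding strict_def by auto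
  obtain e where e: "e > 0" "\<forall>y\<in>Zset. dist y x < e \<longrightarrow> \<not> R' y (1,1)"
    using cp_open_fst[OF cp' z nR x(1)] by blast
  obtain t1 q1 where xx: "x = (t1,q1)" by (cases x)
  have lq: "q1 < 1" "t1 < 1" using x(2) xx unfolding lt_pt_def by auto
  define d where "d = min (e/2) ((1 - q1)/2)"
  have d: "0 < d" "d < e" "q1 + d < 1" using small_step[OF e(1) lq(1)] unfolding d_def by auto
  define y where "y = (t1, q1 + d)"
  have yZ: "y \<in> Zset" using x(1) d unfolding y_def xx by auto
  have "dist y x < e" using d unfolding y_def xx by simp
  then have "\<not> R' y (1,1)" using e yZ by blast
  then have "strict R' (1,1) y" using not_R_strict[OF cp' yZ z] by blast
  moreover have "strict R y (1,1)"
    using strict_trans1[OF cp cp_q[OF cp, of t1 q1 "q1+d"]] x yZ d unfolding y_def xx indiff_def by auto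
  moreover have "lt_pt y (1,1)" using d lq unfolding y_def lt_pt_def by auto
  ultimately show ?thesis using yZ z by blast
qed

lemma between:
  assumes D: "R \<in> D" "R' \<in> D" "R'' \<in> D" and Z: "x \<in> Zset" "z \<in> Zset" "lt_pt x z"
    and s: "strict R x z" "strict R' z x" and i: "indiff R'' x z"
  shows "prec R R'' \<and> prec R'' R'"
proof -
  have "R'' \<noteq> R" using s i unfolding strict_def indiff_def by auto
  moreover have "\<not> prec R'' R"
    using SCL1[OF D(3,1) _ Z] i s unfolding indiff_def strict_def by blast
  ultimately have a: "prec R R''" using prec_total[OF D(1,3)] by blast
  have "R'' \<noteq> R'" using s i unfolding strict_def indiff_def by auto
  moreover have "\<not> prec R' R''"
    using SCL2[OF D(2,3) _ Z] i s unfolding indiff_def strict_def by blast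
  ultimately have "prec R'' R'" using prec_total[OF D(3,2)] by blast
  then show ?thesis using a by blast
qed

definition Cset :: "pref set" where
  "Cset = (\<lambda>(x,z). SOME R. R \<in> D \<and> indiff R x z) `
     {(x,z). x \<in> Zset \<and> z \<in> Zset \<and> fst x \<in> \<rat> \<and> snd x \<in> \<rat> \<and> fst z \<in> \<rat> \<and> snd z \<in> \<rat> \<and> lt_pt x z}"

lemma Cset_countable: "countable Cset"
proof -
  have "{(x,z). x \<in> Zset \<and> z \<in> Zset \<and> fst x \<in> \<rat> \<and> snd x \<in> \<rat> \<and> fst z \<in> \<rat> \<and> snd z \<in> \<rat> \<and> lt_pt x z}
    \<subseteq> ((\<rat> \<times> \<rat>) \<times> (\<rat> \<times> \<rat>) :: (pt \<times> pt) set)" by auto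
  moreover have "countable ((\<rat> \<times> \<rat>) \<times> (\<rat> \<times> \<rat>) :: (pt \<times> pt) set)"
    using countable_rat by (intro countable_SIGMA) auto
  ultimately show ?thesis unfolding Cset_def by (intro countable_image) (rule countable_subset)
qed

lemma Cset_D: "Cset \<subseteq> D"
proof
  fix c assume "c \<in> Cset"
  then obtain x z where xz: "x \<in> Zset" "z \<in> Zset" "lt_pt x z" "c = (SOME R. R \<in> D \<and> indiff R x z)"
    unfolding Cset_def by auto
  have "\<exists>R. R \<in> D \<and> indiff R x z" using drich[OF xz(1-3)] by blast
  then show "c \<in> D" using someI_ex[of "\<lambda>R. R \<in> D \<and> indiff R x z"] xz(4) by auto
qed

lemma Cset_dense:
  assumes D: "R \<in> D" "R' \<in> D" and p: "prec R R'"
  shows "\<exists>c\<in>Cset. prec R c \<and> prec c R'"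
proof -
  have cp: "classical_pref R" and cp': "classical_pref R'" using D dcp by auto
  obtain x z where xz: "x \<in> Zset" "z \<in> Zset" "lt_pt x z" "strict R x z" "strict R' z x"
    using split_pair[OF D p] by blast
  obtain e1 where e1: "e1 > 0" "\<forall>y\<in>Zset. dist y x < e1 \<longrightarrow> \<not> R z y"
    using cp_open_snd[OF cp xz(2) _ xz(1)] xz(4) unfolding strict_def by blast
  obtain e2 where e2: "e2 > 0" "\<forall>y\<in>Zset. dist y x < e2 \<longrightarrow> \<not> R' y z"
    using cp_open_fst[OF cp' xz(2) _ xz(1)] xz(5) unfolding strict_def by blast
  define e3 where "e3 = min (fst z - fst x) (snd z - snd x)"
  have e3: "e3 > 0" using xz(3) unfolding e3_def lt_pt_def by auto
  obtain x' where x': "x' \<in> Zset" "fst x' \<in> \<rat>" "snd x' \<in> \<rat>" "dist x' x < min (min e1 e2) e3"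
    using rat_approx[OF xz(1), of "min (min e1 e2) e3"] e1 e2 e3 by auto
  have x'1: "strict R x' z" using e1 x' not_R_strict[OF cp xz(2) x'(1)] by auto
  have x'2: "strict R' z x'" using e2 x' not_R_strict[OF cp' x'(1) xz(2)] by auto
  have "\<bar>fst x' - fst x\<bar> < e3" "\<bar>snd x' - snd x\<bar> < e3" using x'(4) fst_close snd_close by fastforce+
  then have lt1: "lt_pt x' z" unfolding lt_pt_def e3_def by auto
  obtain f1 where f1: "f1 > 0" "\<forall>y\<in>Zset. dist y z < f1 \<longrightarrow> \<not> R y x'"
    using cp_open_fst[OF cp x'(1) _ xz(2)] x'1 unfolding strict_def by blast
  obtain f2 where f2: "f2 > 0" "\<forall>y\<in>Zset. dist y z < f2 \<longrightarrow> \<not> R' x' y"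
    using cp_open_snd[OF cp' x'(1) _ xz(2)] x'2 unfolding strict_def by blast
  define f3 where "f3 = min (fst z - fst x') (snd z - snd x')"
  have f3: "f3 > 0" using lt1 unfolding f3_def lt_pt_def by auto
  obtain z' where z': "z' \<in> Zset" "fst z' \<in> \<rat>" "snd z' \<in> \<rat>" "dist z' z < min (min f1 f2) f3"
    using rat_approx[OF xz(2), of "min (min f1 f2) f3"] f1 f2 f3 by auto
  have z'1: "strict R x' z'" using f1 z' not_R_strict[OF cp z'(1) x'(1)] by auto
  have z'2: "strict R' z' x'" using f2 z' not_R_strict[OF cp' x'(1) z'(1)] by auto
  have "\<bar>fst z' - fst z\<bar> < f3" "\<bar>snd z' - snd z\<bar> < f3" using z'(4) fst_close snd_close by fastforce+
  then have lt2: "lt_pt x' z'" unfolding lt_pt_def f3_def by auto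
  define c where "c = (SOME R. R \<in> D \<and> indiff R x' z')"
  have cC: "c \<in> Cset" unfolding Cset_def c_def using x' z' lt2 by force
  have "\<exists>R. R \<in> D \<and> indiff R x' z'" using drich[OF x'(1) z'(1) lt2] by blast
  then have "c \<in> D \<and> indiff c x' z'" unfolding c_def using someI_ex[of "\<lambda>R. R \<in> D \<and> indiff R x' z'"] by auto
  then show ?thesis using between[OF D _ x'(1) z'(1) lt2 z'1 z'2] cC by blast
qed

lemma dense_D: "R \<in> D \<Longrightarrow> R' \<in> D \<Longrightarrow> prec R R' \<Longrightarrow> \<exists>c\<in>D. prec R c \<and> prec c R'"
  using Cset_dense Cset_D by blast

lemma seq_down:
  assumes s: "s \<in> D" "T \<in> D" "prec s T"
  shows "\<exists>S. (\<forall>n. S n \<in> D \<and> prec s (S n) \<and> prec (S n) T) \<and> monotone_seq S \<and> order_converges D S s"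
proof -
  have "\<exists>S. (\<forall>n. S n \<in> D \<and> prec s (S n) \<and> prec (S n) T) \<and>
    (\<forall>n. S (Suc n) = S n \<or> prec (S (Suc n)) (S n)) \<and>
    (\<forall>b\<in>D. prec s b \<longrightarrow> (\<forall>\<^sub>F n in sequentially. prec (S n) b))"
    apply (rule seq_approach[where lt=prec and C=Cset and D=D])
    subgoal by (rule prec_trans)
    subgoal by (rule prec_total)
    subgoal by (rule Cset_D)
    subgoal by (rule Cset_countable)
    subgoal by (rule Cset_dense)
    using s by auto
  then obtain S where S: "\<forall>n. S n \<in> D \<and> prec s (S n) \<and> prec (S n) T"
    "\<forall>n. S (Suc n) = S n \<or> prec (S (Suc n)) (S n)"
    "\<forall>b\<in>D. prec s b \<longrightarrow> (\<forall>\<^sub>F n in sequentially. prec (S n) b)" by blast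
  have "monotone_seq S" using S(2) unfolding monotone_seq_def preceq_def by auto
  moreover have "order_converges D S s" unfolding order_converges_def
  proof (intro conjI ballI impI)
    fix a assume "a \<in> D" "prec a s"
    then show "\<forall>\<^sub>F n in sequentially. prec a (S n)"
      using S(1) prec_trans[OF _ s(1)] by (intro always_eventually) blast
  next
    fix b assume "b \<in> D" "prec s b"
    then show "\<forall>\<^sub>F n in sequentially. prec (S n) b" using S(3) by blast
  qed
  ultimately show ?thesis using S by blast
qed

lemma seq_up:
  assumes s: "s \<in> D" "T \<in> D" "prec T s"
  shows "\<exists>S. (\<forall>n. S n \<in> D \<and> prec (S n) s \<and> prec T (S n)) \<and> monotone_seq S \<and> order_converges D S s"
proof -
  have tr: "\<And>a b c. a\<in>D \<Longrightarrow> b\<in>D \<Longrightarrow> c\<in>D \<Longrightarrow> prec b a \<Longrightarrow> prec c b \<Longrightarrow> prec c a"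
    using prec_trans by blast
  have to: "\<And>a b. a\<in>D \<Longrightarrow> b\<in>D \<Longrightarrow> a \<noteq> b \<Longrightarrow> prec b a \<or> prec a b" using prec_total by blast
  have de: "\<And>a b. a\<in>D \<Longrightarrow> b\<in>D \<Longrightarrow> prec b a \<Longrightarrow> (\<exists>c\<in>Cset. prec c a \<and> prec b c)"
    using Cset_dense by blast
  have "\<exists>S. (\<forall>n. S n \<in> D \<and> prec (S n) s \<and> prec T (S n)) \<and>
    (\<forall>n. S (Suc n) = S n \<or> prec (S n) (S (Suc n))) \<and>
    (\<forall>b\<in>D. prec b s \<longrightarrow> (\<forall>\<^sub>F n in sequentially. prec b (S n)))"
    apply (rule seq_approach[where lt="\<lambda>a b. prec b a" and C=Cset and D=D])
    subgoal by (rule tr)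
    subgoal by (rule to)
    subgoal by (rule Cset_D)
    subgoal by (rule Cset_countable)
    subgoal by (rule de)
    using s by auto
  then obtain S where S: "\<forall>n. S n \<in> D \<and> prec (S n) s \<and> prec T (S n)"
    "\<forall>n. S (Suc n) = S n \<or> prec (S n) (S (Suc n))"
    "\<forall>b\<in>D. prec b s \<longrightarrow> (\<forall>\<^sub>F n in sequentially. prec b (S n))" by blast
  have "\<forall>n. preceq (S n) (S (Suc n))" using S(2) unfolding preceq_def by metis
  then have "monotone_seq S" unfolding monotone_seq_def by blast
  moreover have "order_converges D S s" unfolding order_converges_def
  proof (intro conjI ballI impI)
    fix a assume "a \<in> D" "prec a s"
    then show "\<forall>\<^sub>F n in sequentially. prec a (S n)" using S(3) by blast
  next
    fix b assume "b \<in> D" "prec s b"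
    then show "\<forall>\<^sub>F n in sequentially. prec (S n) b"
      using S(1) prec_trans[OF _ s(1)] by (intro always_eventually) blast
  qed
  ultimately show ?thesis using S by blast
qed

lemma nogap:
  assumes AB: "A \<subseteq> D" "B \<subseteq> D" "a0 \<in> A" "b0 \<in> B" "D \<subseteq> A \<union> B"
    and AltB: "\<And>R T. R \<in> A \<Longrightarrow> T \<in> B \<Longrightarrow> prec R T"
    and noMax: "\<And>R. R \<in> A \<Longrightarrow> \<exists>R'\<in>A. prec R R'"
    and noMin: "\<And>T. T \<in> B \<Longrightarrow> \<exists>T'\<in>B. prec T' T"
  shows False
proof -
  define z :: pt where "z = (1,1)"
  have zZ: "z \<in> Zset" unfolding z_def by simp
  have cp0: "classical_pref b0" using AB dcp by auto
  have "strict b0 (0,1) z" using cp_t[OF cp0, of 0 1 1] unfolding z_def by simp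
  then have nR: "\<not> b0 z (0,1)" unfolding strict_def by auto
  obtain e where e: "e > 0" "\<forall>y\<in>Zset. dist y (0,1) < e \<longrightarrow> \<not> b0 z y"
    using cp_open_snd[OF cp0 zZ nR] by auto
  define d where "d = min (e/2) ((1 - 0)/2)"
  have d: "0 < d" "d < e" "0 + d < (1::real)" using small_step[OF e(1), of 0 1] unfolding d_def by auto
  define q0 where "q0 = 1 - d"
  have q0: "0 \<le> q0" "q0 < 1" using d unfolding q0_def by auto
  have lZ: "\<And>t. 0 \<le> t \<Longrightarrow> (t,q0) \<in> Zset" using q0 by auto
  have "dist (0::real, q0) (0,1) < e" using d unfolding q0_def by simp
  then have "\<not> b0 z (0,q0)" using e lZ[of 0] by auto
  then have b00: "b0 (0,q0) z" using cp_total[OF cp0 zZ lZ[of 0]] by blast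
  define UB where "UB = {t. 0 \<le> t \<and> (\<exists>T\<in>B. T (t,q0) z)}"
  have UBne: "UB \<noteq> {}" using b00 AB unfolding UB_def by auto
  have lt1: "\<And>R t. R \<in> D \<Longrightarrow> 0 \<le> t \<Longrightarrow> R (t,q0) z \<Longrightarrow> t < 1"
  proof (rule ccontr)
    fix R t assume R: "R \<in> D" "0 \<le> t" "R (t,q0) z" "\<not> t < 1"
    then have "strict R z (t,q0)" unfolding z_def using cp_smono[OF dcp[OF R(1)], of 1 1 t q0] q0 lZ by auto
    then show False using R unfolding strict_def by auto
  qed
  have bdd: "bdd_above UB"
  proof (rule bdd_aboveI[of _ 1])
    fix t assume "t \<in> UB"
    then obtain T where "T \<in> B" "0 \<le> t" "T (t,q0) z" unfolding UB_def by blast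
    then show "t \<le> 1" using lt1[of T t] AB by force
  qed
  define w where "w = Sup UB"
  have w0: "0 \<le> w" unfolding w_def using UBne bdd by (auto simp: UB_def intro: cSup_upper2)
  have wZ: "(w,q0) \<in> Zset" using lZ w0 by auto
  have Bstrict: "strict T z (w,q0)" if T: "T \<in> B" for T
  proof -
    have TD: "T \<in> D" using T AB by auto
    have cpT: "classical_pref T" using TD dcp by auto
    obtain T' where T': "T' \<in> B" "prec T' T" using noMin[OF T] by blast
    have T'D: "T' \<in> D" using T' AB by auto
    have cpT': "classical_pref T'" using T'D dcp by auto
    have "t < w" if t: "0 \<le> t" "T (t,q0) z" for t
    proof -
      have "t < 1" using lt1[OF TD t] .
      then have ltp: "lt_pt (t,q0) z" using q0 unfolding z_def lt_pt_def by auto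
      have "strict T' (t,q0) z" using SCL2[OF T'D TD T'(2) lZ[OF t(1)] zZ ltp t(2)] .
      then have nR: "\<not> T' z (t,q0)" unfolding strict_def by auto
      obtain f where f: "f > 0" "\<forall>y\<in>Zset. dist y (t,q0) < f \<longrightarrow> \<not> T' z y"
        using cp_open_snd[OF cpT' zZ nR lZ[OF t(1)]] by blast
      have "dist (t + f/2, q0) (t,q0) < f" using f by simp
      then have "\<not> T' z (t + f/2, q0)" using f lZ[of "t + f/2"] t by auto
      then have "T' (t + f/2, q0) z" using cp_total[OF cpT' zZ lZ[of "t + f/2"]] t f by auto
      then have "t + f/2 \<in> UB" unfolding UB_def using T' t f by auto
      then have "t + f/2 \<le> w" unfolding w_def using bdd by (rule cSup_upper)
      then show "t < w" using f by auto
    qed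
    then have "\<not> T (w,q0) z" using w0 by auto
    then show ?thesis using not_R_strict[OF cpT wZ zZ] by blast
  qed
  obtain R' where R': "R' \<in> A" "prec a0 R'" using noMax[OF AB(3)] by blast
  have R'D: "R' \<in> D" using R' AB by auto
  have cpR': "classical_pref R'" using R'D dcp by auto
  have Rw: "R'' (w,q0) z" if R'': "R'' \<in> A" for R''
  proof -
    have R''D: "R'' \<in> D" using R'' AB by auto
    have "UB \<subseteq> {t. (t,q0) \<in> {x\<in>Zset. R'' x z}}"
    proof
      fix t assume "t \<in> UB"
      then obtain T where T: "T \<in> B" "0 \<le> t" "T (t,q0) z" unfolding UB_def by blast
      have "t < 1" using lt1[of T t] T AB by auto
      then have ltp: "lt_pt (t,q0) z" using q0 unfolding z_def lt_pt_def by auto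
      have "R'' (t,q0) z" using prec_weak[OF AltB[OF R'' T(1)] zZ lZ[OF T(2)] ltp T(3)] .
      then show "t \<in> {t. (t,q0) \<in> {x\<in>Zset. R'' x z}}" using lZ T by auto
    qed
    then have "closure UB \<subseteq> {t. (t,q0) \<in> {x\<in>Zset. R'' x z}}"
      by (intro closure_minimal closed_line cp_closed_up[OF dcp[OF R''D] zZ])
    moreover have "w \<in> closure UB" unfolding w_def by (rule closure_contains_Sup[OF UBne bdd])
    ultimately show ?thesis by auto
  qed
  have w1: "w < 1" using lt1[OF R'D w0 Rw[OF R'(1)]] .
  then have ltw: "lt_pt (w,q0) z" using q0 unfolding z_def lt_pt_def by auto
  have Astrict: "strict R (w,q0) z" if R: "R \<in> A" for R
  proof -
    obtain R2 where R2: "R2 \<in> A" "prec R R2" using noMax[OF R] by blast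
    show ?thesis using SCL2[OF _ _ R2(2) wZ zZ ltw Rw[OF R2(1)]] R R2 AB by auto
  qed
  obtain Rs where Rs: "Rs \<in> D" "indiff Rs (w,q0) z" using drich[OF wZ zZ ltw] by blast
  then show False using AB Astrict Bstrict unfolding indiff_def strict_def by blast
qed
end




lemma abstract_ind:
  fixes S :: "real set" and P :: "real \<Rightarrow> real \<Rightarrow> bool"
  assumes clS: "closed S" and finL: "finite {x. x islimpt S}"
    and A: "\<And>u v. u\<in>S \<Longrightarrow> v\<in>S \<Longrightarrow> u<v \<Longrightarrow> S \<inter> {u<..<v} = {} \<Longrightarrow> P u v"
    and B: "\<And>u v w. u\<in>S \<Longrightarrow> v\<in>S \<Longrightarrow> w\<in>S \<Longrightarrow> u<v \<Longrightarrow> v<w \<Longrightarrow> P u v \<Longrightarrow> P v w \<Longrightarrow> P u w"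
    and C: "\<And>u v f. u\<in>S \<Longrightarrow> v\<in>S \<Longrightarrow> u<v \<Longrightarrow> (\<And>n. f n \<in> S \<and> u < f n) \<Longrightarrow> f \<longlonglongrightarrow> v
              \<Longrightarrow> (\<And>n. P u (f n)) \<Longrightarrow> P u v"
    and Dd: "\<And>u v f. u\<in>S \<Longrightarrow> v\<in>S \<Longrightarrow> u<v \<Longrightarrow> (\<And>n. f n \<in> S \<and> u < f n \<and> f n < v) \<Longrightarrow> f \<longlonglongrightarrow> u
              \<Longrightarrow> (\<And>n. P (f n) v) \<Longrightarrow> P u v"
  shows "u\<in>S \<Longrightarrow> v\<in>S \<Longrightarrow> u<v \<Longrightarrow> P u v"
proof -
  define L where "L = {x. x islimpt S}"
  have finL': "finite L" using finL unfolding L_def .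
  have LS: "L \<subseteq> S" using clS unfolding L_def closed_limpt by blast
  have Fin: "\<And>u v. finite (S \<inter> {u..v}) \<Longrightarrow> u\<in>S \<Longrightarrow> v\<in>S \<Longrightarrow> u<v \<Longrightarrow> P u v"
  proof -
    fix u v
    show "finite (S \<inter> {u..v}) \<Longrightarrow> u\<in>S \<Longrightarrow> v\<in>S \<Longrightarrow> u<v \<Longrightarrow> P u v"
    proof (induction "card (S \<inter> {u..v})" arbitrary: u rule: less_induct)
      case (less u)
      define M where "M = S \<inter> {u<..v}"
      have finM: "finite M" using less.prems(1) unfolding M_def
        by (rule finite_subset[rotated]) auto
      have vM: "v \<in> M" using less.prems unfolding M_def by auto
      define u' where "u' = Min M"
      have u'M: "u' \<in> M" unfolding u'_def using finM vM by (intro Min_in) auto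
      have u'le: "\<And>x. x \<in> M \<Longrightarrow> u' \<le> x" unfolding u'_def using finM by auto
      have u': "u' \<in> S" "u < u'" "u' \<le> v" using u'M unfolding M_def by auto
      have "S \<inter> {u<..<u'} = {}" using u'le u' unfolding M_def by force
      then have P1: "P u u'" using A less.prems u' by auto
      show ?case
      proof (cases "u' = v")
        case True then show ?thesis using P1 by simp
      next
        case False
        then have u'v: "u' < v" using u' by auto
        have sub1: "S \<inter> {u'..v} \<subseteq> S \<inter> {u..v}" using u' by auto
        have "u \<in> S \<inter> {u..v} - S \<inter> {u'..v}" using u' less.prems by auto
        then have sub: "S \<inter> {u'..v} \<subset> S \<inter> {u..v}" using sub1 by blast
        then have "card (S \<inter> {u'..v}) < card (S \<inter> {u..v})"
          using less.prems(1) by (rule psubset_card_mono[rotated])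
        moreover have "finite (S \<inter> {u'..v})" using sub less.prems(1) finite_subset by blast
        ultimately have "P u' v" using less.hyps less.prems u' u'v by blast
        then show ?thesis using B[OF less.prems(2) u'(1) less.prems(3) u'(2) u'v P1] by blast
      qed
    qed
  qed
  have finsub: "finite (S \<inter> {a..b})" if "L \<inter> {u<..v} = {}" "u < a" "b \<le> v" for u v a b
  proof (rule ccontr)
    assume inf: "infinite (S \<inter> {a..b})"
    obtain x where x: "x \<in> {a..b}" "x islimpt (S \<inter> {a..b})"
      using Heine_Borel_imp_Bolzano_Weierstrass[OF compact_Icc[of a b] inf Int_lower2] by auto
    then have "x islimpt S" using islimpt_subset by blast
    then show False using x that unfolding L_def by auto
  qed
  have Base: "P u v" if nl: "L \<inter> {u<..v} = {}" and uv: "u\<in>S" "v\<in>S" "u<v" for u v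
  proof (cases "finite (S \<inter> {u..v})")
    case True then show ?thesis using Fin uv by blast
  next
    case False
    obtain x where x: "x \<in> {u..v}" "x islimpt (S \<inter> {u..v})"
      using Heine_Borel_imp_Bolzano_Weierstrass[OF compact_Icc[of u v] False Int_lower2] by auto
    then have "x islimpt S" using islimpt_subset by blast
    then have "x = u" using x nl unfolding L_def by force
    then obtain f where f: "\<And>n. f n \<in> S \<inter> {u..v} - {u}" "f \<longlonglongrightarrow> u"
      using x(2) unfolding islimpt_sequential by blast
    have "\<forall>\<^sub>F n in sequentially. dist (f n) u < v - u" using f(2) uv(3) by (simp add: tendstoD)
    then obtain N where N: "\<And>n. n \<ge> N \<Longrightarrow> dist (f n) u < v - u" unfolding eventually_sequentially by blast
    define g where "g n = f (n + N)" for n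
    have g: "g n \<in> S \<and> u < g n \<and> g n < v" for n
      using f(1)[of "n+N"] N[of "n+N"] unfolding g_def by (auto simp: dist_real_def)
    have gl: "g \<longlonglongrightarrow> u" unfolding g_def using f(2) by (rule LIMSEQ_ignore_initial_segment)
    have "P (g n) v" for n
      using Fin[OF finsub[OF nl] _ uv(2)] g[of n] by auto
    then show ?thesis using Dd[OF uv g gl] by blast
  qed
  have main: "\<forall>u v. card (L \<inter> {u<..v}) \<le> n \<longrightarrow> u\<in>S \<longrightarrow> v\<in>S \<longrightarrow> u<v \<longrightarrow> P u v" for n
  proof (induction n)
    case 0
    show ?case
    proof (intro allI impI)
      fix u v assume a: "card (L \<inter> {u<..v}) \<le> 0" "u\<in>S" "v\<in>S" "u<v"
      then have "L \<inter> {u<..v} = {}" using finL' by auto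
      then show "P u v" using Base a by blast
    qed
  next
    case (Suc n)
    have E: "P u' v'" if e: "card (L \<inter> {u'<..v'}) \<le> Suc n" "v' \<in> L" "u'\<in>S" "v'\<in>S" "u'<v'" for u' v'
    proof (cases "v' islimpt (S \<inter> {u'<..<v'})")
      case True
      then obtain f where f: "\<And>k. f k \<in> S \<inter> {u'<..<v'} - {v'}" "f \<longlonglongrightarrow> v'"
        unfolding islimpt_sequential by blast
      have "P u' (f k)" for k
      proof -
        have sub: "L \<inter> {u'<..f k} \<subseteq> L \<inter> {u'<..v'} - {v'}" using f(1)[of k] by auto
        have "v' \<in> L \<inter> {u'<..v'}" using e by auto
        then have "card (L \<inter> {u'<..v'} - {v'}) = card (L \<inter> {u'<..v'}) - 1"
          by (simp add: card_Diff_singleton)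
        then have "card (L \<inter> {u'<..f k}) \<le> n"
          using card_mono[OF _ sub] finL' e(1) by (metis (no_types, lifting) diff_Suc_1 diff_le_mono finite_Diff finite_Int le_trans)
        then show ?thesis using Suc.IH f(1)[of k] e by auto
      qed
      then show ?thesis using C[OF e(3,4,5), of f] f by auto
    next
      case False
      then obtain ep where ep: "ep > 0" "\<forall>x'\<in>S \<inter> {u'<..<v'}. x' = v' \<or> \<not> dist x' v' < ep"
        unfolding islimpt_approachable by blast
      define W where "W = S \<inter> {u'..<v'}"
      have Wne: "W \<noteq> {}" using e unfolding W_def by auto
      have Wb: "\<And>x. x \<in> W \<Longrightarrow> x \<le> max u' (v' - ep)"
      proof -
        fix x assume x: "x \<in> W"
        show "x \<le> max u' (v' - ep)"
        proof (cases "x = u'")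
          case False
          then have "x \<in> S \<inter> {u'<..<v'}" using x unfolding W_def by auto
          then have "\<not> v' - x < ep" using ep(2) by (auto simp: dist_real_def)
          then show ?thesis by linarith
        qed simp
      qed
      have bdd: "bdd_above W" using Wb by (rule bdd_aboveI)
      define w where "w = Sup W"
      have wle: "w \<le> max u' (v' - ep)" unfolding w_def using Wne Wb by (rule cSup_least)
      have wv: "w < v'" using wle ep e by auto
      have uw: "u' \<le> w" unfolding w_def using bdd e unfolding W_def by (auto intro: cSup_upper)
      have "w \<in> closure W" unfolding w_def by (rule closure_contains_Sup[OF Wne bdd])
      moreover have "closure W \<subseteq> S \<inter> {u'..v'}" unfolding W_def
        by (intro closure_minimal closed_Int clS closed_real_atLeastAtMost) auto
      ultimately have wS: "w \<in> S" by auto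
      have gap: "S \<inter> {w<..<v'} = {}"
      proof (rule ccontr)
        assume "S \<inter> {w<..<v'} \<noteq> {}"
        then obtain x where x: "x \<in> S" "w < x" "x < v'" by auto
        then have "x \<in> W" using uw unfolding W_def by auto
        then have "x \<le> w" unfolding w_def using bdd by (rule cSup_upper)
        then show False using x by auto
      qed
      have Pw: "P w v'" using A[OF wS e(4) wv gap] .
      show ?thesis
      proof (cases "w = u'")
        case True then show ?thesis using Pw by simp
      next
        case False
        then have uw': "u' < w" using uw by auto
        have sub: "L \<inter> {u'<..w} \<subseteq> L \<inter> {u'<..v'} - {v'}" using wv by auto
        have "v' \<in> L \<inter> {u'<..v'}" using e by auto
        then have "card (L \<inter> {u'<..v'} - {v'}) = card (L \<inter> {u'<..v'}) - 1"
          by (simp add: card_Diff_singleton)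
        then have "card (L \<inter> {u'<..w}) \<le> n"
          using card_mono[OF _ sub] finL' e(1) by (metis (no_types, lifting) diff_Suc_1 diff_le_mono finite_Diff finite_Int le_trans)
        then have "P u' w" using Suc.IH e uw' wS by auto
        then show ?thesis using B[OF e(3) wS e(4) uw' wv _ Pw] by blast
      qed
    qed
    show ?case
    proof (intro allI impI)
      fix u v assume a: "card (L \<inter> {u<..v}) \<le> Suc n" "u\<in>S" "v\<in>S" "u<v"
      show "P u v"
      proof (cases "L \<inter> {u<..v} = {}")
        case True then show ?thesis using Base a by blast
      next
        case False
        define l where "l = Max (L \<inter> {u<..v})"
        have fin2: "finite (L \<inter> {u<..v})" using finL' by auto
        have lin: "l \<in> L \<inter> {u<..v}" unfolding l_def using fin2 False by (rule Max_in)
        have lmax: "\<And>x. x \<in> L \<inter> {u<..v} \<Longrightarrow> x \<le> l" unfolding l_def using fin2 by auto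
        have lS: "l \<in> S" using lin LS by auto
        show ?thesis
        proof (cases "l = v")
          case True then show ?thesis using E[OF a(1) _ a(2,3,4)] lin by auto
        next
          case False
          then have lv: "l < v" "u < l" using lin by auto
          have "card (L \<inter> {u<..l}) \<le> card (L \<inter> {u<..v})"
            using lv by (intro card_mono[OF fin2]) auto
          then have P1: "P u l" using E[of u l] a lin lS lv by auto
          have "L \<inter> {l<..v} = {}"
          proof (rule ccontr)
            assume "L \<inter> {l<..v} \<noteq> {}"
            then obtain x where "x \<in> L" "l < x" "x \<le> v" by auto
            then have "x \<le> l" using lmax lv by auto
            then show False using \<open>l < x\<close> by auto
          qed
          then have P2: "P l v" using Base lS a lv by blast
          show ?thesis using B[OF a(2) lS a(3) lv(2) lv(1) P1 P2] .
        qed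
      qed
    qed
  qed
  show "u\<in>S \<Longrightarrow> v\<in>S \<Longrightarrow> u<v \<Longrightarrow> P u v" using main by blast
qed


lemma islimpt_neg: "(x::real) islimpt (uminus ` S) \<Longrightarrow> -x islimpt S"
  unfolding islimpt_approachable
proof (intro allI impI)
  fix e :: real assume h: "\<forall>e>0. \<exists>x'\<in>uminus ` S. x' \<noteq> x \<and> dist x' x < e" and e: "e > 0"
  then obtain x' where "x' \<in> uminus ` S" "x' \<noteq> x" "dist x' x < e" by blast
  then show "\<exists>x'\<in>S. x' \<noteq> - x \<and> dist x' (- x) < e"
    by (intro bexI[of _ "-x'"]) (auto simp: dist_real_def)
qed

lemma abstract_ind_dual:
  fixes S :: "real set" and P :: "real \<Rightarrow> real \<Rightarrow> bool"
  assumes clS: "closed S" and finL: "finite {x. x islimpt S}"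
    and A: "\<And>u v. u\<in>S \<Longrightarrow> v\<in>S \<Longrightarrow> u<v \<Longrightarrow> S \<inter> {u<..<v} = {} \<Longrightarrow> P u v"
    and B: "\<And>u v w. u\<in>S \<Longrightarrow> v\<in>S \<Longrightarrow> w\<in>S \<Longrightarrow> u<v \<Longrightarrow> v<w \<Longrightarrow> P u v \<Longrightarrow> P v w \<Longrightarrow> P u w"
    and C: "\<And>u v f. u\<in>S \<Longrightarrow> v\<in>S \<Longrightarrow> u<v \<Longrightarrow> (\<And>n. f n \<in> S \<and> f n < v) \<Longrightarrow> f \<longlonglongrightarrow> u
              \<Longrightarrow> (\<And>n. P (f n) v) \<Longrightarrow> P u v"
    and Dd: "\<And>u v f. u\<in>S \<Longrightarrow> v\<in>S \<Longrightarrow> u<v \<Longrightarrow> (\<And>n. f n \<in> S \<and> u < f n \<and> f n < v) \<Longrightarrow> f \<longlonglongrightarrow> v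
              \<Longrightarrow> (\<And>n. P u (f n)) \<Longrightarrow> P u v"
  shows "u\<in>S \<Longrightarrow> v\<in>S \<Longrightarrow> u<v \<Longrightarrow> P u v"
proof -
  define S' where "S' = uminus ` S"
  define P' where "P' x y = P (-y) (-x)" for x y
  have memS': "x \<in> S' \<longleftrightarrow> -x \<in> S" for x unfolding S'_def by (auto intro: image_eqI[of _ _ "-x"])
  have cl': "closed S'" unfolding S'_def using closed_negations[OF clS] .
  have "{x. x islimpt S'} \<subseteq> uminus ` {x. x islimpt S}"
    unfolding S'_def using islimpt_neg by (auto intro: image_eqI[of _ _ "-x" for x])
  then have fin': "finite {x. x islimpt S'}" using finL by (rule finite_subset[OF _ finite_imageI])
  have main: "P' x y" if "x \<in> S'" "y \<in> S'" "x < y" for x y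
  proof (rule abstract_ind[OF cl' fin', of P'])
    fix u v assume h: "u \<in> S'" "v \<in> S'" "u < v" "S' \<inter> {u<..<v} = {}"
    have "S \<inter> {-v<..<-u} = {}"
    proof (rule ccontr)
      assume "S \<inter> {-v<..<-u} \<noteq> {}"
      then obtain x where "x \<in> S" "-v < x" "x < -u" by auto
      then have "-x \<in> S' \<inter> {u<..<v}" using memS' by auto
      then show False using h by auto
    qed
    then show "P' u v" unfolding P'_def using A h memS' by auto
  next
    fix u v w assume "u \<in> S'" "v \<in> S'" "w \<in> S'" "u < v" "v < w" "P' u v" "P' v w"
    then show "P' u w" unfolding P'_def using B[of "-w" "-v" "-u"] memS' by auto
  next
    fix u v and f :: "nat \<Rightarrow> real"
    assume h: "u \<in> S'" "v \<in> S'" "u < v" "\<And>n. f n \<in> S' \<and> u < f n" "f \<longlonglongrightarrow> v" "\<And>n. P' u (f n)"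
    have "(\<lambda>n. - f n) \<longlonglongrightarrow> -v" using h(5) by (rule tendsto_minus)
    then show "P' u v" unfolding P'_def
      using C[of "-v" "-u" "\<lambda>n. - f n"] h memS' unfolding P'_def by auto
  next
    fix u v and f :: "nat \<Rightarrow> real"
    assume h: "u \<in> S'" "v \<in> S'" "u < v" "\<And>n. f n \<in> S' \<and> u < f n \<and> f n < v" "f \<longlonglongrightarrow> u" "\<And>n. P' (f n) v"
    have "(\<lambda>n. - f n) \<longlonglongrightarrow> -u" using h(5) by (rule tendsto_minus)
    then show "P' u v" unfolding P'_def
      using Dd[of "-v" "-u" "\<lambda>n. - f n"] h memS' unfolding P'_def by auto
  qed (use that in auto)
  show "u\<in>S \<Longrightarrow> v\<in>S \<Longrightarrow> u<v \<Longrightarrow> P u v"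
    using main[of "-v" "-u"] memS' unfolding P'_def by auto
qed




lemma lt_trans: "lt_pt (a::pt) b \<Longrightarrow> lt_pt b c \<Longrightarrow> lt_pt a c" unfolding lt_pt_def by auto
lemma lt_irrefl: "\<not> lt_pt (a::pt) a" unfolding lt_pt_def by auto
lemma lt_asym: "lt_pt (a::pt) b \<Longrightarrow> \<not> lt_pt b a" unfolding lt_pt_def by auto
lemma le_lt_trans: "le_pt (a::pt) b \<Longrightarrow> lt_pt b c \<Longrightarrow> lt_pt a c" unfolding le_pt_def lt_pt_def by auto
lemma lt_le_trans: "lt_pt (a::pt) b \<Longrightarrow> le_pt b c \<Longrightarrow> lt_pt a c" unfolding le_pt_def lt_pt_def by auto
lemma le_refl: "le_pt (a::pt) a" unfolding le_pt_def by auto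

locale mech = dom D for D +
  fixes F :: "pref \<Rightarrow> pt"
  assumes FZ: "\<forall>R\<in>D. F R \<in> Zset" and mono: "monotone_mech D F" and cont: "VF_continuous D F"
    and clo: "closedin (top_of_set Zset) (F ` D)" and fin: "finite {x. x islimpt (F ` D)}"
begin

lemma Fmono: "R \<in> D \<Longrightarrow> T \<in> D \<Longrightarrow> prec R T \<Longrightarrow> le_pt (F R) (F T)"
  using mono unfolding monotone_mech_def by blast

lemma Fchain: assumes "R \<in> D" "T \<in> D" shows "le_pt (F R) (F T) \<or> le_pt (F T) (F R)"
proof (cases "R = T")
  case True then show ?thesis using le_refl by auto
next
  case False
  then have "prec R T \<or> prec T R" using prec_total assms by blast
  then show ?thesis using Fmono assms by blast
qed

lemma Fprec: assumes "R \<in> D" "T \<in> D" "lt_pt (F R) (F T)" shows "prec R T"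
proof -
  have "R \<noteq> T" using assms(3) lt_irrefl by metis
  moreover have "\<not> prec T R" using Fmono[of T R] assms le_lt_trans lt_irrefl by blast
  ultimately show ?thesis using prec_total assms by blast
qed

lemma tri: assumes "R \<in> D" "T \<in> D" shows "F R = F T \<or> lt_pt (F R) (F T) \<or> lt_pt (F T) (F R)"
  using Fchain[OF assms] unfolding le_pt_def by auto

definition consec where
  "consec a b \<longleftrightarrow> a \<in> F ` D \<and> b \<in> F ` D \<and> lt_pt a b \<and> \<not> (\<exists>c\<in>F ` D. lt_pt a c \<and> lt_pt c b)"

definition H1 where "H1 a b \<longleftrightarrow> (\<forall>R\<in>D. F R = a \<longrightarrow> R a b)"
definition H2 where "H2 a b \<longleftrightarrow> (\<forall>T\<in>D. F T = b \<longrightarrow> T b a)"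

lemma consec_cases:
  assumes c: "consec a b" and R: "R \<in> D"
  shows "F R = a \<or> F R = b \<or> lt_pt (F R) a \<or> lt_pt b (F R)"
proof -
  have cc: "a \<in> F ` D" "b \<in> F ` D" "lt_pt a b" "\<not> (\<exists>c\<in>F ` D. lt_pt a c \<and> lt_pt c b)"
    using c unfolding consec_def by blast+
  obtain Ra where ra: "Ra \<in> D" "a = F Ra" using cc(1) by blast
  obtain Rb where rb: "Rb \<in> D" "b = F Rb" using cc(2) by blast
  have h1: "F R = a \<or> lt_pt (F R) a \<or> lt_pt a (F R)" using tri[OF R ra(1)] ra(2) by simp
  have h2: "F R = b \<or> lt_pt (F R) b \<or> lt_pt b (F R)" using tri[OF R rb(1)] rb(2) by simp
  have FR: "F R \<in> F ` D" using R by (rule imageI)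
  have h3: "\<not> (lt_pt a (F R) \<and> lt_pt (F R) b)" using cc(4) FR by blast
  show ?thesis using h1 h2 h3 by blast
qed

lemma L1_boundary:
  assumes c: "consec a b"
  shows "\<exists>s\<in>D. indiff s a b \<and> (\<forall>R\<in>D. F R = a \<longrightarrow> preceq R s) \<and> (\<forall>T\<in>D. F T = b \<longrightarrow> preceq s T)"
proof -
  obtain Ra Rb where ab: "Ra \<in> D" "F Ra = a" "Rb \<in> D" "F Rb = b" and lab: "lt_pt a b"
    using c unfolding consec_def by auto
  have AltB: "prec R T" if "R \<in> D" "T \<in> D" "F R = a" "F T = b" for R T
    using Fprec that lab by auto
  show ?thesis
  proof (cases "\<exists>s\<in>D. F s = a \<and> (\<forall>R\<in>D. F R = a \<longrightarrow> preceq R s)")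
    case True
    then obtain s where s: "s \<in> D" "F s = a" "\<forall>R\<in>D. F R = a \<longrightarrow> preceq R s" by blast
    obtain S where S: "\<forall>n. S n \<in> D \<and> prec s (S n) \<and> prec (S n) Rb" "monotone_seq S" "order_converges D S s"
      using seq_down[OF s(1) ab(3) AltB[OF s(1) ab(3) s(2) ab(4)]] by blast
    have FS: "F (S n) = b" for n
    proof -
      have Sn: "S n \<in> D" "prec s (S n)" "prec (S n) Rb" using S by auto
      have "F (S n) \<noteq> a"
      proof
        assume "F (S n) = a"
        then have "preceq (S n) s" using s Sn by auto
        then show False using Sn prec_asym[OF s(1) Sn(1)] prec_irrefl unfolding preceq_def by auto
      qed
      moreover have "\<not> lt_pt (F (S n)) a" using Fmono[OF s(1) Sn(1) Sn(2)] s(2) le_lt_trans lt_irrefl by blast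
      moreover have "\<not> lt_pt b (F (S n))" using Fmono[OF Sn(1) ab(3) Sn(3)] ab(4) lt_le_trans lt_irrefl by blast
      ultimately show ?thesis using consec_cases[OF c Sn(1)] by blast
    qed
    have SD: "S n \<in> D" for n using S(1) by blast
    obtain L where L: "(\<lambda>n. F (S n)) \<longlonglongrightarrow> L" "indiff s L (F s)"
      using cont[unfolded VF_continuous_def, rule_format, OF s(1) SD S(2) S(3)] by blast
    have "(\<lambda>n. F (S n)) = (\<lambda>n. b)" using FS by auto
    then have "L = b" using L(1) LIMSEQ_unique[OF tendsto_const[of b]] by metis
    then have "indiff s a b" using L(2) s(2) unfolding indiff_def by auto
    moreover have "\<forall>T\<in>D. F T = b \<longrightarrow> preceq s T" using AltB s unfolding preceq_def by blast
    ultimately show ?thesis using s by blast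
  next
    case noMax: False
    show ?thesis
    proof (cases "\<exists>s\<in>D. F s = b \<and> (\<forall>T\<in>D. F T = b \<longrightarrow> preceq s T)")
      case True
      then obtain s where s: "s \<in> D" "F s = b" "\<forall>T\<in>D. F T = b \<longrightarrow> preceq s T" by blast
      obtain S where S: "\<forall>n. S n \<in> D \<and> prec (S n) s \<and> prec Ra (S n)" "monotone_seq S" "order_converges D S s"
        using seq_up[OF s(1) ab(1) AltB[OF ab(1) s(1) ab(2) s(2)]] by blast
      have FS: "F (S n) = a" for n
      proof -
        have Sn: "S n \<in> D" "prec (S n) s" "prec Ra (S n)" using S by auto
        have "F (S n) \<noteq> b"
        proof
          assume "F (S n) = b"
          then have "preceq s (S n)" using s Sn by auto
          then show False using Sn prec_asym[OF s(1) Sn(1)] prec_irrefl unfolding preceq_def by auto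
        qed
        moreover have "\<not> lt_pt b (F (S n))" using Fmono[OF Sn(1) s(1) Sn(2)] s(2) lt_le_trans lt_irrefl by blast
        moreover have "\<not> lt_pt (F (S n)) a" using Fmono[OF ab(1) Sn(1) Sn(3)] ab(2) le_lt_trans lt_irrefl by blast
        ultimately show ?thesis using consec_cases[OF c Sn(1)] by blast
      qed
      have SD: "S n \<in> D" for n using S(1) by blast
      obtain L where L: "(\<lambda>n. F (S n)) \<longlonglongrightarrow> L" "indiff s L (F s)"
        using cont[unfolded VF_continuous_def, rule_format, OF s(1) SD S(2) S(3)] by blast
      have "(\<lambda>n. F (S n)) = (\<lambda>n. a)" using FS by auto
      then have "L = a" using L(1) LIMSEQ_unique[OF tendsto_const[of a]] by metis
      then have "indiff s a b" using L(2) s(2) unfolding indiff_def by auto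
      moreover have "\<forall>R\<in>D. F R = a \<longrightarrow> preceq R s" using AltB s unfolding preceq_def by blast
      ultimately show ?thesis using s by blast
    next
      case noMin: False
      define A where "A = {R\<in>D. le_pt (F R) a}"
      define B where "B = {R\<in>D. le_pt b (F R)}"
      have False
      proof (rule nogap[of A B Ra Rb])
        show "A \<subseteq> D" "B \<subseteq> D" unfolding A_def B_def by auto
        show "Ra \<in> A" "Rb \<in> B" using ab unfolding A_def B_def le_pt_def by auto
        show "D \<subseteq> A \<union> B" using consec_cases[OF c] unfolding A_def B_def le_pt_def by blast
      next
        fix R T assume RT: "R \<in> A" "T \<in> B"
        then have "lt_pt (F R) b" using le_lt_trans[OF _ lab] unfolding A_def by blast
        then have "lt_pt (F R) (F T)" using lt_le_trans RT unfolding B_def by blast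
        then show "prec R T" using Fprec RT unfolding A_def B_def by blast
      next
        fix R assume R: "R \<in> A"
        show "\<exists>R'\<in>A. prec R R'"
        proof (cases "F R = a")
          case True
          then obtain R' where R': "R' \<in> D" "F R' = a" "\<not> preceq R' R" using noMax R unfolding A_def by blast
          then have "prec R R'" using prec_total[of R R'] R unfolding A_def preceq_def by auto
          then show ?thesis using R' unfolding A_def le_pt_def by auto
        next
          case False
          then have "lt_pt (F R) a" using R unfolding A_def le_pt_def by auto
          then show ?thesis using Fprec[of R Ra] R ab unfolding A_def le_pt_def by auto
        qed
      next
        fix T assume T: "T \<in> B"
        show "\<exists>T'\<in>B. prec T' T"
        proof (cases "F T = b")
          case True
          then obtain T' where T': "T' \<in> D" "F T' = b" "\<not> preceq T T'" using noMin T unfolding B_def by blast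
          then have "prec T' T" using prec_total[of T T'] T unfolding B_def preceq_def by auto
          then show ?thesis using T' unfolding B_def le_pt_def by auto
        next
          case False
          then have "lt_pt b (F T)" using T unfolding B_def le_pt_def by auto
          then show ?thesis using Fprec[of Rb T] T ab unfolding B_def le_pt_def by auto
        qed
      qed
      then show ?thesis by blast
    qed
  qed
qed

lemma L1: assumes c: "consec a b" shows "H1 a b" "H2 a b"
proof -
  obtain s where s: "s \<in> D" "indiff s a b" "\<forall>R\<in>D. F R = a \<longrightarrow> preceq R s" "\<forall>T\<in>D. F T = b \<longrightarrow> preceq s T"
    using L1_boundary[OF c] by blast
  have ab: "a \<in> Zset" "b \<in> Zset" "lt_pt a b" using c FZ unfolding consec_def by auto
  show "H1 a b" unfolding H1_def
  proof (intro ballI impI)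
    fix R assume R: "R \<in> D" "F R = a"
    then have "R = s \<or> prec R s" using s unfolding preceq_def by auto
    then show "R a b" using s prec_weak[of R s b a] ab unfolding indiff_def by auto
  qed
  show "H2 a b" unfolding H2_def
  proof (intro ballI impI)
    fix T assume T: "T \<in> D" "F T = b"
    then have "T = s \<or> prec s T" using s unfolding preceq_def by auto
    then show "T b a" using s SCL1[OF s(1) T(1) _ ab(1,2,3)] unfolding indiff_def strict_def by auto
  qed
qed


lemma Rn_closed: "closed (F ` D)"
  using closedin_closed_trans[OF clo closed_Zset] .

lemma RnZ: "a \<in> F ` D \<Longrightarrow> a \<in> Zset" using FZ by auto

lemma Rn_tri: "a \<in> F ` D \<Longrightarrow> b \<in> F ` D \<Longrightarrow> a = b \<or> lt_pt a b \<or> lt_pt b a"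
  using tri by blast

lemma Rn_fst_inj: "a \<in> F ` D \<Longrightarrow> b \<in> F ` D \<Longrightarrow> fst a = fst b \<Longrightarrow> a = b"
  using Rn_tri unfolding lt_pt_def by fastforce

lemma Rn_fst_lt: "a \<in> F ` D \<Longrightarrow> b \<in> F ` D \<Longrightarrow> fst a < fst b \<Longrightarrow> lt_pt a b"
  using Rn_tri unfolding lt_pt_def by fastforce

definition pp where "pp = inv_into (F ` D) fst"

lemma inj_fst: "inj_on fst (F ` D)" using Rn_fst_inj by (rule inj_onI)

lemma pp_fst: "a \<in> F ` D \<Longrightarrow> pp (fst a) = a"
  unfolding pp_def using inv_into_f_f[OF inj_fst] by blast

lemma pp_in: assumes "s \<in> fst ` F ` D" shows "pp s \<in> F ` D \<and> fst (pp s) = s"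
proof -
  obtain a where a: "a \<in> F ` D" "s = fst a" using assms by blast
  then show ?thesis using pp_fst[OF a(1)] by simp
qed

lemma K_compact: "compact (F ` D \<inter> {x. fst x \<le> c})"
proof -
  have "closed (F ` D \<inter> {x. fst x \<le> c})"
    by (intro closed_Int Rn_closed closed_Collect_le continuous_intros)
  moreover have "bounded (F ` D \<inter> {x. fst x \<le> c})"
  proof (rule bounded_subset)
    show "bounded ({0..c} \<times> {0..1::real})" by (intro bounded_Times bounded_closed_interval)
    show "F ` D \<inter> {x. fst x \<le> c} \<subseteq> {0..c} \<times> {0..1}"
    proof
      fix x assume "x \<in> F ` D \<inter> {x. fst x \<le> c}"
      then have "x \<in> Zset" "fst x \<le> c" using RnZ by auto
      then show "x \<in> {0..c} \<times> {0..1}" by (cases x) auto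
    qed
  qed
  ultimately show ?thesis using compact_eq_bounded_closed by blast
qed

lemma pp_cont_on: "continuous_on (fst ` (F ` D \<inter> {x. fst x \<le> c})) pp"
  by (rule continuous_on_inv[OF continuous_on_fst[OF continuous_on_id] K_compact]) (auto simp: pp_fst)

lemma pp_tendsto:
  assumes f: "\<And>n. f n \<in> fst ` F ` D" and l: "l \<in> fst ` F ` D" and lim: "f \<longlonglongrightarrow> l"
  shows "(\<lambda>n. pp (f n)) \<longlonglongrightarrow> pp l"
proof -
  define K where "K = F ` D \<inter> {x. fst x \<le> l + 1}"
  have ev: "\<forall>\<^sub>F n in sequentially. f n < l + 1" using lim by (rule order_tendstoD) simp
  have "\<forall>\<^sub>F n in sequentially. f n \<in> fst ` K"
    using ev
  proof (rule eventually_mono)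
    fix n assume "f n < l + 1"
    then show "f n \<in> fst ` K" using pp_in[OF f[of n]] unfolding K_def
      by (intro image_eqI[of _ _ "pp (f n)"]) auto
  qed
  moreover have "l \<in> fst ` K" using pp_in[OF l] unfolding K_def
    by (intro image_eqI[of _ _ "pp l"]) auto
  ultimately show ?thesis using continuous_on_tendsto_compose[OF pp_cont_on lim] unfolding K_def by blast
qed

lemma S_closed: "closed (fst ` F ` D)"
  unfolding closed_sequential_limits
proof (intro allI impI)
  fix f l assume h: "(\<forall>n. f n \<in> fst ` F ` D) \<and> f \<longlonglongrightarrow> l"
  define K where "K = F ` D \<inter> {x. fst x \<le> l + 1}"
  have cK: "closed (fst ` K)" unfolding K_def
    by (intro compact_imp_closed compact_continuous_image continuous_on_fst continuous_on_id K_compact)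
  have ev: "\<forall>\<^sub>F n in sequentially. f n < l + 1" using h by (intro order_tendstoD) auto
  have ev2: "\<forall>\<^sub>F n in sequentially. f n \<in> fst ` K"
    using ev
  proof (rule eventually_mono)
    fix n assume "f n < l + 1"
    then show "f n \<in> fst ` K" using pp_in[of "f n"] h unfolding K_def
      by (intro image_eqI[of _ _ "pp (f n)"]) auto
  qed
  have "l \<in> fst ` K" using Lim_in_closed_set[OF cK ev2 sequentially_bot] h by blast
  then show "l \<in> fst ` F ` D" unfolding K_def by auto
qed

lemma S_limpt_fin: "finite {s. s islimpt (fst ` F ` D)}"
proof -
  have "{s. s islimpt (fst ` F ` D)} \<subseteq> fst ` {x. x islimpt (F ` D)}"
  proof
    fix s assume "s \<in> {s. s islimpt (fst ` F ` D)}"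
    then have sl: "s islimpt (fst ` F ` D)" by auto
    then have sS: "s \<in> fst ` F ` D" using S_closed closed_limpt by blast
    obtain f where f: "\<And>n. f n \<in> fst ` F ` D - {s}" "f \<longlonglongrightarrow> s" using sl unfolding islimpt_sequential by blast
    have "(\<lambda>n. pp (f n)) \<longlonglongrightarrow> pp s" using pp_tendsto[OF _ sS f(2)] f(1) by blast
    moreover have "\<forall>n. pp (f n) \<in> F ` D - {pp s}"
      using pp_in pp_in[OF sS] f(1) by (metis DiffD1 DiffD2 DiffI singletonD singletonI)
    ultimately have "pp s islimpt (F ` D)" unfolding islimpt_sequential
      by (intro exI[of _ "\<lambda>n. pp (f n)"]) blast
    then show "s \<in> fst ` {x. x islimpt (F ` D)}" using pp_in[OF sS] by force
  qed
  then show ?thesis using fin by (rule finite_subset[OF _ finite_imageI])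
qed

lemma pp_lt: "u \<in> fst ` F ` D \<Longrightarrow> v \<in> fst ` F ` D \<Longrightarrow> u < v \<Longrightarrow> lt_pt (pp u) (pp v)"
  using pp_in Rn_fst_lt by metis

lemma consec_pp:
  assumes u: "u \<in> fst ` F ` D" and v: "v \<in> fst ` F ` D" and uv: "u < v"
    and gap: "fst ` F ` D \<inter> {u<..<v} = {}"
  shows "consec (pp u) (pp v)"
  unfolding consec_def
proof (intro conjI)
  show "pp u \<in> F ` D" "pp v \<in> F ` D" using pp_in u v by auto
  show "lt_pt (pp u) (pp v)" using pp_lt u v uv .
  show "\<not> (\<exists>c\<in>F ` D. lt_pt (pp u) c \<and> lt_pt c (pp v))"
  proof
    assume "\<exists>c\<in>F ` D. lt_pt (pp u) c \<and> lt_pt c (pp v)"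
    then obtain c where c: "c \<in> F ` D" "lt_pt (pp u) c" "lt_pt c (pp v)" by blast
    then have "fst c \<in> fst ` F ` D \<inter> {u<..<v}" using pp_in[OF u] pp_in[OF v] unfolding lt_pt_def by auto
    then show False using gap by auto
  qed
qed

lemma H1_all: "a \<in> F ` D \<Longrightarrow> b \<in> F ` D \<Longrightarrow> lt_pt a b \<Longrightarrow> H1 a b"
proof -
  define S where "S = fst ` F ` D"
  have main: "H1 (pp u) (pp v)" if "u \<in> S" "v \<in> S" "u < v" for u v
  proof (rule abstract_ind[OF S_closed S_limpt_fin, of "\<lambda>u v. H1 (pp u) (pp v)"])
    fix u v assume "u \<in> fst ` F ` D" "v \<in> fst ` F ` D" "u < v" "fst ` F ` D \<inter> {u<..<v} = {}"
    then show "H1 (pp u) (pp v)" using L1(1)[OF consec_pp] by blast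
  next
    fix u v w assume h: "u \<in> fst ` F ` D" "v \<in> fst ` F ` D" "w \<in> fst ` F ` D" "u < v" "v < w"
      "H1 (pp u) (pp v)" "H1 (pp v) (pp w)"
    show "H1 (pp u) (pp w)" unfolding H1_def
    proof (intro ballI impI)
      fix R assume R: "R \<in> D" "F R = pp u"
      obtain Rb where Rb: "Rb \<in> D" "F Rb = pp v" using pp_in[OF h(2)] by auto
      have ltuv: "lt_pt (pp u) (pp v)" and ltvw: "lt_pt (pp v) (pp w)" using pp_lt h by auto
      have "prec R Rb" using Fprec[OF R(1) Rb(1)] R Rb ltuv by auto
      moreover have "Rb (pp v) (pp w)" using h(7) Rb unfolding H1_def by auto
      ultimately have "R (pp v) (pp w)"
        using prec_weak[of R Rb "pp w" "pp v"] RnZ pp_in h ltvw by blast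
      moreover have "R (pp u) (pp v)" using h(6) R unfolding H1_def by auto
      ultimately show "R (pp u) (pp w)" using cp_trans[OF dcp[OF R(1)]] by blast
    qed
  next
    fix u v and f :: "nat \<Rightarrow> real"
    assume h: "u \<in> fst ` F ` D" "v \<in> fst ` F ` D" "u < v" "\<And>n. f n \<in> fst ` F ` D \<and> u < f n"
      "f \<longlonglongrightarrow> v" "\<And>n. H1 (pp u) (pp (f n))"
    have lim: "(\<lambda>n. pp (f n)) \<longlonglongrightarrow> pp v" using pp_tendsto h by blast
    show "H1 (pp u) (pp v)" unfolding H1_def
    proof (intro ballI impI)
      fix R assume R: "R \<in> D" "F R = pp u"
      have uZ: "pp u \<in> Zset" using RnZ pp_in h by blast
      have "pp (f n) \<in> {y\<in>Zset. R (pp u) y}" for n using h(6)[of n] R RnZ pp_in h(4)[of n] unfolding H1_def by blast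
      then have "pp v \<in> {y\<in>Zset. R (pp u) y}"
        using closed_sequentially[OF cp_closed_lo[OF dcp[OF R(1)] uZ] _ lim] by blast
      then show "R (pp u) (pp v)" by auto
    qed
  next
    fix u v and f :: "nat \<Rightarrow> real"
    assume h: "u \<in> fst ` F ` D" "v \<in> fst ` F ` D" "u < v" "\<And>n. f n \<in> fst ` F ` D \<and> u < f n \<and> f n < v"
      "f \<longlonglongrightarrow> u" "\<And>n. H1 (pp (f n)) (pp v)"
    have lim: "(\<lambda>n. pp (f n)) \<longlonglongrightarrow> pp u" using pp_tendsto h by blast
    show "H1 (pp u) (pp v)" unfolding H1_def
    proof (intro ballI impI)
      fix R assume R: "R \<in> D" "F R = pp u"
      have vZ: "pp v \<in> Zset" using RnZ pp_in h by blast
      have "pp (f n) \<in> {y\<in>Zset. R y (pp v)}" for n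
      proof -
        have "pp (f n) \<in> F ` D" using pp_in h(4)[of n] by blast
        then obtain Rn where Rn: "Rn \<in> D" "F Rn = pp (f n)" by (metis imageE)
        have "lt_pt (pp u) (pp (f n))" "lt_pt (pp (f n)) (pp v)" using pp_lt h(1,2) h(4)[of n] by auto
        moreover have "prec R Rn" using Fprec[OF R(1) Rn(1)] R Rn calculation by auto
        moreover have "Rn (pp (f n)) (pp v)" using h(6)[of n] Rn unfolding H1_def by auto
        ultimately have "R (pp (f n)) (pp v)"
          using prec_weak[of R Rn "pp v" "pp (f n)"] vZ RnZ pp_in h(4)[of n] by blast
        then show ?thesis using RnZ pp_in h(4)[of n] by auto
      qed
      then have "pp u \<in> {y\<in>Zset. R y (pp v)}"
        using closed_sequentially[OF cp_closed_up[OF dcp[OF R(1)] vZ] _ lim] by blast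
      then show "R (pp u) (pp v)" by auto
    qed
  qed (use that in \<open>auto simp: S_def\<close>)
  assume ab: "a \<in> F ` D" "b \<in> F ` D" "lt_pt a b"
  have "fst a \<in> S" "fst b \<in> S" "fst a < fst b" using ab unfolding S_def lt_pt_def by auto
  then show "H1 a b" using main pp_fst ab by metis
qed

lemma H2_all: "a \<in> F ` D \<Longrightarrow> b \<in> F ` D \<Longrightarrow> lt_pt a b \<Longrightarrow> H2 a b"
proof -
  define S where "S = fst ` F ` D"
  have main: "H2 (pp u) (pp v)" if "u \<in> S" "v \<in> S" "u < v" for u v
  proof (rule abstract_ind_dual[OF S_closed S_limpt_fin, of "\<lambda>u v. H2 (pp u) (pp v)"])
    fix u v assume "u \<in> fst ` F ` D" "v \<in> fst ` F ` D" "u < v" "fst ` F ` D \<inter> {u<..<v} = {}"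
    then show "H2 (pp u) (pp v)" using L1(2)[OF consec_pp] by blast
  next
    fix u v w assume h: "u \<in> fst ` F ` D" "v \<in> fst ` F ` D" "w \<in> fst ` F ` D" "u < v" "v < w"
      "H2 (pp u) (pp v)" "H2 (pp v) (pp w)"
    show "H2 (pp u) (pp w)" unfolding H2_def
    proof (intro ballI impI)
      fix T assume T: "T \<in> D" "F T = pp w"
      obtain Rb where Rb: "Rb \<in> D" "F Rb = pp v" using pp_in[OF h(2)] by auto
      have ltuv: "lt_pt (pp u) (pp v)" and ltvw: "lt_pt (pp v) (pp w)" using pp_lt h by auto
      have "prec Rb T" using Fprec[OF Rb(1) T(1)] T Rb ltvw by auto
      moreover have "Rb (pp v) (pp u)" using h(6) Rb unfolding H2_def by auto
      ultimately have "strict T (pp v) (pp u)"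
        using SCL1[OF Rb(1) T(1) _ _ _ ltuv] RnZ pp_in h by blast
      moreover have "T (pp w) (pp v)" using h(7) T unfolding H2_def by auto
      ultimately show "T (pp w) (pp u)" using cp_trans[OF dcp[OF T(1)]] unfolding strict_def by blast
    qed
  next
    fix u v and f :: "nat \<Rightarrow> real"
    assume h: "u \<in> fst ` F ` D" "v \<in> fst ` F ` D" "u < v" "\<And>n. f n \<in> fst ` F ` D \<and> f n < v"
      "f \<longlonglongrightarrow> u" "\<And>n. H2 (pp (f n)) (pp v)"
    have lim: "(\<lambda>n. pp (f n)) \<longlonglongrightarrow> pp u" using pp_tendsto h by blast
    show "H2 (pp u) (pp v)" unfolding H2_def
    proof (intro ballI impI)
      fix T assume T: "T \<in> D" "F T = pp v"
      have vZ: "pp v \<in> Zset" using RnZ pp_in h by blast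
      have "pp (f n) \<in> {y\<in>Zset. T (pp v) y}" for n using h(6)[of n] T RnZ pp_in h(4)[of n] unfolding H2_def by blast
      then have "pp u \<in> {y\<in>Zset. T (pp v) y}"
        using closed_sequentially[OF cp_closed_lo[OF dcp[OF T(1)] vZ] _ lim] by blast
      then show "T (pp v) (pp u)" by auto
    qed
  next
    fix u v and f :: "nat \<Rightarrow> real"
    assume h: "u \<in> fst ` F ` D" "v \<in> fst ` F ` D" "u < v" "\<And>n. f n \<in> fst ` F ` D \<and> u < f n \<and> f n < v"
      "f \<longlonglongrightarrow> v" "\<And>n. H2 (pp u) (pp (f n))"
    have lim: "(\<lambda>n. pp (f n)) \<longlonglongrightarrow> pp v" using pp_tendsto h by blast
    show "H2 (pp u) (pp v)" unfolding H2_def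
    proof (intro ballI impI)
      fix T assume T: "T \<in> D" "F T = pp v"
      have uZ: "pp u \<in> Zset" using RnZ pp_in h by blast
      have "pp (f n) \<in> {y\<in>Zset. T y (pp u)}" for n
      proof -
        have "pp (f n) \<in> F ` D" using pp_in h(4)[of n] by blast
        then obtain Tn where Tn: "Tn \<in> D" "F Tn = pp (f n)" by (metis imageE)
        have lt: "lt_pt (pp u) (pp (f n))" "lt_pt (pp (f n)) (pp v)" using pp_lt h(1,2) h(4)[of n] by auto
        have "prec Tn T" using Fprec[OF Tn(1) T(1)] T Tn lt by auto
        moreover have "Tn (pp (f n)) (pp u)" using h(6)[of n] Tn unfolding H2_def by auto
        ultimately have "strict T (pp (f n)) (pp u)"
          using SCL1[OF Tn(1) T(1) _ _ _ lt(1)] uZ RnZ pp_in h(4)[of n] by blast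
        then show ?thesis using RnZ pp_in h(4)[of n] unfolding strict_def by auto
      qed
      then have "pp v \<in> {y\<in>Zset. T y (pp u)}"
        using closed_sequentially[OF cp_closed_up[OF dcp[OF T(1)] uZ] _ lim] by blast
      then show "T (pp v) (pp u)" by auto
    qed
  qed (use that in \<open>auto simp: S_def\<close>)
  assume ab: "a \<in> F ` D" "b \<in> F ` D" "lt_pt a b"
  have "fst a \<in> S" "fst b \<in> S" "fst a < fst b" using ab unfolding S_def lt_pt_def by auto
  then show "H2 a b" using main pp_fst ab by metis
qed

lemma SP: "strategy_proof D F"
  unfolding strategy_proof_def
proof (intro ballI)
  fix R1 R2 assume R: "R1 \<in> D" "R2 \<in> D"
  have im: "F R1 \<in> F ` D" "F R2 \<in> F ` D" using R by auto
  consider "F R1 = F R2" | "lt_pt (F R1) (F R2)" | "lt_pt (F R2) (F R1)" using tri[OF R] by blast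
  then show "R1 (F R1) (F R2)"
  proof cases
    case 1 then show ?thesis using cp_refl[OF dcp[OF R(1)]] FZ R by auto
  next
    case 2 then show ?thesis using H1_all[OF im 2] R(1) unfolding H1_def by blast
  next
    case 3 then show ?thesis using H2_all[OF im(2,1) 3] R(1) unfolding H2_def by blast
  qed
qed

end

theorem mainTheorem14:
  fixes D :: "pref set" and F :: "pref \<Rightarrow> pt"
  assumes "rich_single_crossing D"
    and "\<forall>R\<in>D. F R \<in> Zset"
    and "monotone_mech D F"
    and "VF_continuous D F"
    and "countable (F ` D)"
    and "closedin (top_of_set Zset) (F ` D)"
    and "finite {x. x islimpt (F ` D)}"
  shows "strategy_proof D F"
proof -
  interpret mech D F
    by unfold_locales (use assms in auto)
  show ?thesis by (rule SP)
qed

end
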